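(* Let $D,D^*\subset\mathbb{R}^2=\mathbb{C}$ be bounded domains, let $1<p<\infty$, and let $\phi\colon D\to D^*$ be a $C^1$-diffeomorphism with $\phi\in W^{1,p}(D,\mathbb{C})$. Then $\phi^{-1}\in W^{1,1}(D^*,\mathbb{C})$ and $$\mathcal{E}_1(\phi^{-1})\le 4\,(\mathrm{Area}(D))^{1-\frac1p}\,\mathcal{E}_p(\phi)^{\frac1p}.$$
   Context: For $f=u+iv\in W^{1,q}(\Omega,\mathbb{C})$, the $q$-energy is $\mathcal{E}_q(f)=\int_\Omega(|\nabla u|^q+|\nabla v|^q)\,d\mu$, with $|\nabla u|=\sqrt{u_x^2+u_y^2}$ and $\mu$ Lebesgue measure. *)

theory Defs
  imports "HOL-Analysis.Analysis"
begin

text \<open>We identify R^2 with the complex plane. For a map f on C, the partial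
derivatives at z are the values of the (real) Frechet derivative on the
basis vectors 1 (x-direction) and i (y-direction).\<close>

definition pdx :: "(complex \<Rightarrow> 'a::real_normed_vector) \<Rightarrow> complex \<Rightarrow> 'a" where
  "pdx f z = frechet_derivative f (at z) 1"

definition pdy :: "(complex \<Rightarrow> 'a::real_normed_vector) \<Rightarrow> complex \<Rightarrow> 'a" where
  "pdy f z = frechet_derivative f (at z) \<i>"

definition C1_map_on :: "(complex \<Rightarrow> complex) \<Rightarrow> complex set \<Rightarrow> bool" where
  "C1_map_on f S \<longleftrightarrow> (\<forall>z\<in>S. f differentiable (at z)) \<and>
     continuous_on S (pdx f) \<and> continuous_on S (pdy f)"

definition C1_diffeomorphism :: "(complex \<Rightarrow> complex) \<Rightarrow> complex set \<Rightarrow> complex set \<Rightarrow> bool" where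
  "C1_diffeomorphism f S T \<longleftrightarrow> bij_betw f S T \<and> C1_map_on f S \<and> C1_map_on (inv_into S f) T"

fun Ck_real :: "nat \<Rightarrow> (complex \<Rightarrow> real) \<Rightarrow> bool" where
  "Ck_real 0 f = continuous_on UNIV f"
| "Ck_real (Suc n) f = ((\<forall>z. f differentiable (at z)) \<and> continuous_on UNIV f \<and>
      Ck_real n (pdx f) \<and> Ck_real n (pdy f))"

definition smooth_real :: "(complex \<Rightarrow> real) \<Rightarrow> bool" where
  "smooth_real f \<longleftrightarrow> (\<forall>n. Ck_real n f)"

definition test_fun :: "complex set \<Rightarrow> (complex \<Rightarrow> real) \<Rightarrow> bool" where
  "test_fun D \<psi> \<longleftrightarrow> smooth_real \<psi> \<and> compact (closure {z. \<psi> z \<noteq> 0}) \<and>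
     closure {z. \<psi> z \<noteq> 0} \<subseteq> D"

definition Lp_on :: "real \<Rightarrow> complex set \<Rightarrow> (complex \<Rightarrow> real) \<Rightarrow> bool" where
  "Lp_on p D h \<longleftrightarrow> set_borel_measurable lebesgue D h \<and>
     set_integrable lebesgue D (\<lambda>z. \<bar>h z\<bar> powr p)"

definition weak_pdx :: "complex set \<Rightarrow> (complex \<Rightarrow> real) \<Rightarrow> (complex \<Rightarrow> real) \<Rightarrow> bool" where
  "weak_pdx D h g \<longleftrightarrow> (\<forall>\<psi>. test_fun D \<psi> \<longrightarrow>
     (LINT z:D|lebesgue. h z * pdx \<psi> z) = - (LINT z:D|lebesgue. g z * \<psi> z))"

definition weak_pdy :: "complex set \<Rightarrow> (complex \<Rightarrow> real) \<Rightarrow> (complex \<Rightarrow> real) \<Rightarrow> bool" where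
  "weak_pdy D h g \<longleftrightarrow> (\<forall>\<psi>. test_fun D \<psi> \<longrightarrow>
     (LINT z:D|lebesgue. h z * pdy \<psi> z) = - (LINT z:D|lebesgue. g z * \<psi> z))"

definition W1p_real :: "real \<Rightarrow> complex set \<Rightarrow> (complex \<Rightarrow> real) \<Rightarrow> bool" where
  "W1p_real p D h \<longleftrightarrow> Lp_on p D h \<and>
     (\<exists>gx gy. Lp_on p D gx \<and> Lp_on p D gy \<and> weak_pdx D h gx \<and> weak_pdy D h gy)"

definition W1p :: "real \<Rightarrow> complex set \<Rightarrow> (complex \<Rightarrow> complex) \<Rightarrow> bool" where
  "W1p p D f \<longleftrightarrow> W1p_real p D (\<lambda>z. Re (f z)) \<and> W1p_real p D (\<lambda>z. Im (f z))"

text \<open>q-energy of f = u + iv on D, for C^1 maps (partials are the classical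
ones, which coincide a.e. with the weak ones).\<close>
definition energy :: "real \<Rightarrow> complex set \<Rightarrow> (complex \<Rightarrow> complex) \<Rightarrow> real" where
  "energy q D f = (LINT z:D|lebesgue.
     (sqrt ((Re (pdx f z))\<^sup>2 + (Re (pdy f z))\<^sup>2)) powr q +
     (sqrt ((Im (pdx f z))\<^sup>2 + (Im (pdy f z))\<^sup>2)) powr q)"

end

theory Submission
  imports Defs "HOL-Computational_Algebra.Polynomial"
begin

definition T2 :: "real^2 \<Rightarrow> complex" where "T2 x = Complex (x$1) (x$2)"
definition Ti2 :: "complex \<Rightarrow> real^2" where "Ti2 z = vector [Re z, Im z]"

lemma T2_Ti2[simp]: "T2 (Ti2 z) = z" by (simp add: T2_def Ti2_def complex_eq_iff)
lemma Ti2_T2[simp]: "Ti2 (T2 x) = x"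
  by (simp add: T2_def Ti2_def vec_eq_iff forall_2)

lemma linear_T2: "linear T2"
  by (rule linearI) (auto simp: T2_def complex_eq_iff)
lemma linear_Ti2: "linear Ti2"
  by (rule linearI) (auto simp: Ti2_def vec_eq_iff forall_2)
lemma bl_T2: "bounded_linear T2" using linear_T2 linear_conv_bounded_linear by blast
lemma bl_Ti2: "bounded_linear Ti2" using linear_Ti2 linear_conv_bounded_linear by blast

lemma T2_meas[measurable]: "T2 \<in> borel \<rightarrow>\<^sub>M borel"
  by (intro borel_measurable_continuous_onI linear_continuous_on bl_T2)
lemma Ti2_meas[measurable]: "Ti2 \<in> borel \<rightarrow>\<^sub>M borel"
  by (intro borel_measurable_continuous_onI linear_continuous_on bl_Ti2)

lemma Basis_2: "(Basis :: (real^2) set) = {axis 1 1, axis 2 1}"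
  by (auto simp: Basis_vec_def UNIV_2)
lemma axis12: "axis 1 (1::real) \<noteq> (axis 2 1 :: real^2)"
  by (simp add: axis_eq_axis)
lemma vec2_le: "(\<forall>i. (x::real^2) $ i \<le> y $ i) \<longleftrightarrow> x$1 \<le> y$1 \<and> x$2 \<le> y$2"
  by (metis (full_types) exhaust_2)

lemma distr_T2: "distr lborel borel T2 = (lborel :: complex measure)"
proof (rule lborel_eqI[symmetric])
  fix l u :: complex assume le: "\<And>b. b \<in> Basis \<Longrightarrow> l \<bullet> b \<le> u \<bullet> b"
  have eq: "T2 -` box l u = box (Ti2 l) (Ti2 u)"
    by (auto simp: box_def Basis_complex_def T2_def Ti2_def Basis_vec_def inner_axis forall_2)
  have le2: "Re l \<le> Re u" "Im l \<le> Im u" using le[of 1] le[of \<i>] by (auto simp: Basis_complex_def)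
  have "emeasure (lborel::(real^2) measure) (box (Ti2 l) (Ti2 u)) = (\<Prod>b\<in>Basis. (Ti2 u - Ti2 l) \<bullet> b)"
    using le2 by (intro emeasure_lborel_box) (auto simp: Basis_2 inner_axis Ti2_def)
  also have "\<dots> = (Re u - Re l) * (Im u - Im l)"
    by (simp add: Basis_2 axis12 inner_axis Ti2_def)
  finally show "emeasure (distr lborel borel T2) (box l u) = (\<Prod>b\<in>Basis. (u - l) \<bullet> b)"
    by (simp add: emeasure_distr eq Basis_complex_def ennreal_mult' le2)
qed simp

lemma TL:
  fixes F :: "complex \<Rightarrow> real"
  assumes [measurable]: "F \<in> borel_measurable borel"
  shows "integrable lebesgue (\<lambda>y. F (T2 y)) \<longleftrightarrow> integrable lebesgue F"
    and "integral\<^sup>L lebesgue (\<lambda>y. F (T2 y)) = integral\<^sup>L lebesgue F"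
proof -
  have m2: "(\<lambda>y. F (T2 y)) \<in> borel_measurable borel" by measurable
  show "integrable lebesgue (\<lambda>y. F (T2 y)) \<longleftrightarrow> integrable lebesgue F"
    using integrable_distr_eq[of T2 lborel borel F] distr_T2
    by (simp add: integrable_completion m2)
  show "integral\<^sup>L lebesgue (\<lambda>y. F (T2 y)) = integral\<^sup>L lebesgue F"
    using integral_distr[of T2 lborel borel F] distr_T2
    by (simp add: integral_completion m2)
qed

lemma TL_set:
  fixes f :: "complex \<Rightarrow> real"
  assumes S: "open S" and c: "continuous_on S f"
  shows "set_integrable lebesgue (T2 -` S) (\<lambda>y. f (T2 y)) \<longleftrightarrow> set_integrable lebesgue S f"
    and "(LINT y:T2 -` S|lebesgue. f (T2 y)) = (LINT x:S|lebesgue. f x)"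
proof -
  have m: "(\<lambda>x. indicator S x *\<^sub>R f x) \<in> borel_measurable borel"
    using S c by (intro borel_measurable_continuous_on_indicator) auto
  have eq: "(\<lambda>y. indicator (T2 -` S) y *\<^sub>R f (T2 y)) = (\<lambda>y. (\<lambda>x. indicator S x *\<^sub>R f x) (T2 y))"
    by (auto simp: indicator_def)
  show "set_integrable lebesgue (T2 -` S) (\<lambda>y. f (T2 y)) \<longleftrightarrow> set_integrable lebesgue S f"
    unfolding set_integrable_def eq using TL(1)[OF m] .
  show "(LINT y:T2 -` S|lebesgue. f (T2 y)) = (LINT x:S|lebesgue. f x)"
    unfolding set_lebesgue_integral_def eq using TL(2)[OF m] .
qed

definition jac :: "(complex \<Rightarrow> complex) \<Rightarrow> real" where
  "jac L = Re (L 1) * Im (L \<i>) - Im (L 1) * Re (L \<i>)"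

lemma det_T2: "det (matrix (Ti2 \<circ> L \<circ> T2)) = jac L"
proof -
  have e: "Complex 1 0 = 1" "Complex 0 1 = \<i>" by (simp_all add: complex_eq_iff)
  show ?thesis by (simp add: det_2 matrix_def jac_def Ti2_def T2_def axis_def e)
qed

lemma cov_complex:
  fixes g :: "complex \<Rightarrow> complex" and H :: "complex \<Rightarrow> real"
  assumes S: "open S" and gS: "open (g ` S)"
    and der: "\<And>x. x \<in> S \<Longrightarrow> (g has_derivative g' x) (at x)"
    and inj: "inj_on g S"
    and c1: "continuous_on S (\<lambda>x. \<bar>jac (g' x)\<bar> * H (g x))"
    and c2: "continuous_on (g ` S) H"
    and int: "set_integrable lebesgue S (\<lambda>x. \<bar>jac (g' x)\<bar> * H (g x))"
  shows "set_integrable lebesgue (g ` S) H \<and>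
    (LINT z:g ` S|lebesgue. H z) = (LINT x:S|lebesgue. \<bar>jac (g' x)\<bar> * H (g x))"
proof -
  define S2 where "S2 = T2 -` S"
  define G where "G = Ti2 \<circ> g \<circ> T2"
  define G' where "G' = (\<lambda>x. Ti2 \<circ> g' (T2 x) \<circ> T2)"
  define b where "b = (vec (LINT x:S|lebesgue. \<bar>jac (g' x)\<bar> * H (g x)) :: real^1)"
  have S2l: "S2 \<in> sets lebesgue"
  proof -
    have "T2 -` S \<in> sets borel" using measurable_sets[OF T2_meas, of S] S by simp
    then show ?thesis unfolding S2_def by (intro sets_completionI_sets) simp
  qed
  have der2: "(G has_derivative G' x) (at x within S2)" if "x \<in> S2" for x
  proof -
    have "(G has_derivative G' x) (at x)"
    proof -
      have d1: "(T2 has_derivative T2) (at x)" by (rule bounded_linear_imp_has_derivative[OF bl_T2])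
      have d2: "(g has_derivative g' (T2 x)) (at (T2 x))" using der that S2_def by simp
      have d3: "(Ti2 has_derivative Ti2) (at (g (T2 x)))" by (rule bounded_linear_imp_has_derivative[OF bl_Ti2])
      have "(Ti2 \<circ> g has_derivative Ti2 \<circ> g' (T2 x)) (at (T2 x))" using diff_chain_at[OF d2 d3] .
      from diff_chain_at[OF d1 this] show ?thesis unfolding G_def G'_def by (simp add: o_def)
    qed
    then show ?thesis by (rule has_derivative_at_withinI)
  qed
  have inj2: "inj_on G S2"
    using inj unfolding G_def S2_def inj_on_def by (metis T2_Ti2 Ti2_T2 comp_apply vimageE)
  have GS2: "G ` S2 = T2 -` (g ` S)"
  proof
    show "G ` S2 \<subseteq> T2 -` (g ` S)" unfolding G_def S2_def by auto
    show "T2 -` (g ` S) \<subseteq> G ` S2"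
    proof
      fix y assume "y \<in> T2 -` (g ` S)"
      then obtain s where s: "s \<in> S" "T2 y = g s" by auto
      then have "G (Ti2 s) = y" unfolding G_def by (metis Ti2_T2 T2_Ti2 comp_apply)
      moreover have "Ti2 s \<in> S2" using s S2_def by simp
      ultimately show "y \<in> G ` S2" by blast
    qed
  qed
  note cov = has_absolute_integral_change_of_variables[OF S2l der2 inj2, of "\<lambda>y. vec (H (T2 y))" b]
  have A: "(\<lambda>x. \<bar>det (matrix (G' x))\<bar> *\<^sub>R (vec (H (T2 (G x))) :: real^1)) absolutely_integrable_on S2
        \<longleftrightarrow> (\<lambda>y. \<bar>jac (g' (T2 y))\<bar> * H (g (T2 y))) absolutely_integrable_on S2"
    by (simp add: absolutely_integrable_on_1_iff G'_def G_def det_T2)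
  have A2: "(\<lambda>y. \<bar>jac (g' (T2 y))\<bar> * H (g (T2 y))) absolutely_integrable_on S2"
    unfolding S2_def using TL_set(1)[OF S c1] int by simp
  have B: "integral S2 (\<lambda>x. \<bar>det (matrix (G' x))\<bar> *\<^sub>R (vec (H (T2 (G x))) :: real^1)) = b"
    using A2 TL_set(2)[OF S c1]
    by (simp add: integral_on_1_eq G'_def G_def det_T2 b_def set_lebesgue_integral_eq_integral(2) S2_def)
  have R: "(\<lambda>y. vec (H (T2 y)) :: real^1) absolutely_integrable_on G ` S2 \<and>
      integral (G ` S2) (\<lambda>y. vec (H (T2 y))) = b"
    using cov A A2 B by blast
  have R1: "(\<lambda>y. H (T2 y)) absolutely_integrable_on T2 -` (g ` S)"
    using R GS2 by (simp add: absolutely_integrable_on_1_iff)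
  then have R2: "set_integrable lebesgue (g ` S) H" using TL_set(1)[OF gS c2] by simp
  have "integral (T2 -` (g ` S)) (\<lambda>y. H (T2 y)) = (LINT x:S|lebesgue. \<bar>jac (g' x)\<bar> * H (g x))"
    using R GS2 by (simp add: integral_on_1_eq b_def vec_eq_iff)
  then have "(LINT z:g ` S|lebesgue. H z) = (LINT x:S|lebesgue. \<bar>jac (g' x)\<bar> * H (g x))"
    using TL_set(2)[OF gS c2] set_lebesgue_integral_eq_integral(2)[OF R1] by simp
  with R2 show ?thesis by blast
qed

lemma distr_translate_complex: "distr lborel borel (\<lambda>x. c + x) = (lborel :: complex measure)"
  using lborel_affine[of 1 c] by (simp add: density_1)

lemma translate_integral:
  fixes f :: "complex \<Rightarrow> real"
  assumes [measurable]: "f \<in> borel_measurable borel"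
  shows "integral\<^sup>L lborel (\<lambda>z. f (c + z)) = integral\<^sup>L lborel f"
    and "integrable lborel (\<lambda>z. f (c + z)) \<longleftrightarrow> integrable lborel f"
  using integral_distr[of "\<lambda>x. c + x" lborel borel f] integrable_distr_eq[of "\<lambda>x. c + x" lborel borel f]
  by (simp_all add: distr_translate_complex)

lemma deriv_zero_outside:
  fixes F :: "complex \<Rightarrow> real"
  assumes "closed K" "\<And>z. z \<notin> K \<Longrightarrow> F z = 0" "w \<notin> K"
  shows "frechet_derivative F (at w) = (\<lambda>_. 0)" "(F has_derivative (\<lambda>_. 0)) (at w)"
proof -
  have "((\<lambda>_. 0::real) has_derivative (\<lambda>_. 0)) (at w)" by simp
  then show d: "(F has_derivative (\<lambda>_. 0)) (at w)"
    using has_derivative_transform_within_open[of "\<lambda>_. 0" "\<lambda>_. 0" w UNIV "-K" F] assms by auto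
  then show "frechet_derivative F (at w) = (\<lambda>_. 0)" by (metis frechet_derivative_at)
qed

lemma int_deriv_zero:
  fixes F :: "complex \<Rightarrow> real"
  assumes dF: "\<And>z. F differentiable (at z)"
    and cont: "continuous_on UNIV (\<lambda>z. frechet_derivative F (at z) v)"
    and K: "compact K" and zero: "\<And>z. z \<notin> K \<Longrightarrow> F z = 0"
  shows "integral\<^sup>L lborel (\<lambda>z. frechet_derivative F (at z) v) = 0"
proof -
  define DF where "DF = (\<lambda>z. frechet_derivative F (at z) v)"
  have hd: "(F has_derivative frechet_derivative F (at z)) (at z)" for z
    using dF frechet_derivative_works by blast
  have lin: "linear (frechet_derivative F (at z))" for z
    using hd has_derivative_linear by blast
  have gder: "((\<lambda>t. F (z + t *\<^sub>R v)) has_real_derivative DF (z + t *\<^sub>R v)) (at t)" for z t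
  proof -
    have d1: "((\<lambda>t. z + t *\<^sub>R v) has_derivative (\<lambda>s. s *\<^sub>R v)) (at t)"
      by (auto intro!: derivative_eq_intros)
    have "((\<lambda>t. F (z + t *\<^sub>R v)) has_derivative (\<lambda>s. frechet_derivative F (at (z + t *\<^sub>R v)) (s *\<^sub>R v))) (at t)"
      using diff_chain_at[OF d1 hd] by (simp add: o_def)
    moreover have "(\<lambda>s. frechet_derivative F (at (z + t *\<^sub>R v)) (s *\<^sub>R v)) = (\<lambda>s. DF (z + t *\<^sub>R v) * s)"
      using lin by (auto simp: DF_def linear_scale)
    ultimately show ?thesis by (simp add: has_field_derivative_def)
  qed
  have contF: "continuous_on UNIV F"
    using dF by (simp add: differentiable_imp_continuous_within continuous_at_imp_continuous_on)
  have [measurable]: "F \<in> borel_measurable borel" using contF by (rule borel_measurable_continuous_onI)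
  have [measurable]: "DF \<in> borel_measurable borel" using cont unfolding DF_def by (rule borel_measurable_continuous_onI)
  have DF0: "DF w = 0" if "w \<notin> K" for w
    using deriv_zero_outside[OF compact_imp_closed[OF K] zero that] by (simp add: DF_def)
  obtain M where M: "\<And>w. \<bar>DF w\<bar> \<le> M" "M \<ge> 0"
  proof -
    have "bounded (DF ` K)"
      using K cont unfolding DF_def by (intro compact_imp_bounded compact_continuous_image) (auto intro: continuous_on_subset)
    then obtain B where B: "\<And>w. w \<in> K \<Longrightarrow> \<bar>DF w\<bar> \<le> B" by (auto simp: bounded_iff)
    show ?thesis
      apply (rule that[of "max B 0"])
      using B DF0 by (force simp: max_def)+
  qed
  define K1 where "K1 = {x + y |x y. x \<in> K \<and> y \<in> cball 0 (norm v)}"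
  have K1: "compact K1" unfolding K1_def by (intro compact_sums K compact_cball)
  define h where "h = (\<lambda>n::nat. inverse (real (Suc n)))"
  have hpos: "0 < h n" "h n \<le> 1" for n by (auto simp: h_def field_simps)
  define s where "s = (\<lambda>n z. (F (z + h n *\<^sub>R v) - F z) / h n)"
  have [measurable]: "s n \<in> borel_measurable borel" for n unfolding s_def by measurable
  have wint: "integrable lborel (\<lambda>z. indicator K1 z *\<^sub>R M)"
    using K1 by (intro borel_integrable_compact) auto
  have intF: "integrable lborel F"
  proof -
    have "integrable lborel (\<lambda>x. indicator K x *\<^sub>R F x)"
      using K contF by (intro borel_integrable_compact) (auto intro: continuous_on_subset)
    moreover have "(\<lambda>x. indicator K x *\<^sub>R F x) = F" using zero by (auto simp: indicator_def fun_eq_iff)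
    ultimately show ?thesis by simp
  qed
  have ints: "integral\<^sup>L lborel (s n) = 0" for n
  proof -
    have m2: "(\<lambda>z. F (z + h n *\<^sub>R v)) \<in> borel_measurable borel" by measurable
    have i2: "integrable lborel (\<lambda>z. F (z + h n *\<^sub>R v))"
      using translate_integral(2)[of F "h n *\<^sub>R v"] intF by (simp add: add.commute)
    have e2: "integral\<^sup>L lborel (\<lambda>z. F (z + h n *\<^sub>R v)) = integral\<^sup>L lborel F"
      using translate_integral(1)[of F "h n *\<^sub>R v"] by (simp add: add.commute)
    show ?thesis unfolding s_def using i2 intF e2 by simp
  qed
  have lim: "(\<lambda>n. s n z) \<longlonglongrightarrow> DF z" for z
  proof -
    have "((\<lambda>t. (F (z + t *\<^sub>R v) - F (z + 0 *\<^sub>R v)) / t) \<longlongrightarrow> DF (z + 0 *\<^sub>R v)) (at 0)"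
      using gder[of z 0] by (simp add: has_field_derivative_iff)
    then have L: "((\<lambda>t. (F (z + t *\<^sub>R v) - F z) / t) \<longlongrightarrow> DF z) (at 0)" by simp
    have hl: "h \<longlonglongrightarrow> 0" unfolding h_def by (rule LIMSEQ_inverse_real_of_nat)
    have hn: "\<And>i. h i \<in> UNIV - {0}" using hpos by (metis DiffI UNIV_I less_irrefl singletonD)
    have "((\<lambda>t. (F (z + t *\<^sub>R v) - F z) / t) \<circ> h) \<longlonglongrightarrow> DF z"
      using L[unfolded tendsto_at_iff_sequentially, rule_format, OF hn hl] .
    then show ?thesis by (simp add: s_def o_def)
  qed
  have bound: "norm (s n z) \<le> indicator K1 z *\<^sub>R M" for n z
  proof (cases "z \<in> K1")
    case True
    obtain \<xi> where "0 < \<xi>" "\<xi> < h n" and xi: "F (z + h n *\<^sub>R v) - F (z + 0 *\<^sub>R v) = (h n - 0) * DF (z + \<xi> *\<^sub>R v)"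
      using MVT2[of 0 "h n" "\<lambda>t. F (z + t *\<^sub>R v)" "\<lambda>t. DF (z + t *\<^sub>R v)"] gder hpos[of n] by blast
    have "s n z = DF (z + \<xi> *\<^sub>R v)" using xi hpos[of n] by (simp add: s_def)
    then show ?thesis using True M by simp
  next
    case False
    then have z: "z \<notin> K" unfolding K1_def by (force intro: exI[of _ z] exI[of _ 0])
    have "z + h n *\<^sub>R v \<notin> K"
    proof
      assume a: "z + h n *\<^sub>R v \<in> K"
      have "norm (- (h n *\<^sub>R v)) \<le> norm v" using hpos[of n] by (simp add: mult_left_le_one_le)
      then have "z \<in> K1" unfolding K1_def using a
        by (intro CollectI exI[of _ "z + h n *\<^sub>R v"] exI[of _ "- (h n *\<^sub>R v)"]) (auto simp: dist_norm)
      with False show False by simp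
    qed
    then show ?thesis using z zero False by (simp add: s_def)
  qed
  have "(\<lambda>n. integral\<^sup>L lborel (s n)) \<longlonglongrightarrow> integral\<^sup>L lborel DF"
    by (rule integral_dominated_convergence[where w="\<lambda>z. indicator K1 z *\<^sub>R M"])
      (use wint lim bound in auto)
  then have "(\<lambda>n. 0::real) \<longlonglongrightarrow> integral\<^sup>L lborel DF" using ints by simp
  then have "0 = integral\<^sup>L lborel DF" by (simp add: LIMSEQ_const_iff)
  then show ?thesis unfolding DF_def by simp
qed

lemma ibp:
  fixes u \<psi> :: "complex \<Rightarrow> real"
  assumes S: "open S"
    and du: "\<And>z. z \<in> S \<Longrightarrow> u differentiable (at z)"
    and cu: "continuous_on S (\<lambda>z. frechet_derivative u (at z) v)"
    and dpsi: "\<And>z. \<psi> differentiable (at z)"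
    and cpsi: "continuous_on UNIV (\<lambda>z. frechet_derivative \<psi> (at z) v)"
    and K: "compact K" "K \<subseteq> S" "\<And>z. z \<notin> K \<Longrightarrow> \<psi> z = 0"
  shows "set_integrable lebesgue S (\<lambda>z. u z * frechet_derivative \<psi> (at z) v)"
    "set_integrable lebesgue S (\<lambda>z. frechet_derivative u (at z) v * \<psi> z)"
    "(LINT z:S|lebesgue. u z * frechet_derivative \<psi> (at z) v) =
       - (LINT z:S|lebesgue. frechet_derivative u (at z) v * \<psi> z)"
proof -
  define Dp where "Dp = (\<lambda>z. frechet_derivative \<psi> (at z) v)"
  define Du where "Du = (\<lambda>z. frechet_derivative u (at z) v)"
  define F where "F = (\<lambda>z. u z * \<psi> z)"
  define E where "E = (\<lambda>z. if z \<in> S then u z * Dp z + Du z * \<psi> z else 0)"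
  have Kc: "closed K" using K compact_imp_closed by blast
  have Dp0: "Dp z = 0" if "z \<notin> K" for z
    using deriv_zero_outside[OF Kc K(3) that] by (simp add: Dp_def)
  have F0: "F z = 0" if "z \<notin> K" for z using K(3)[OF that] by (simp add: F_def)
  have hu: "(u has_derivative frechet_derivative u (at z)) (at z)" if "z \<in> S" for z
    using du[OF that] frechet_derivative_works by blast
  have hp: "(\<psi> has_derivative frechet_derivative \<psi> (at z)) (at z)" for z
    using dpsi frechet_derivative_works by blast
  have dF: "(F has_derivative (\<lambda>h. u z * frechet_derivative \<psi> (at z) h + frechet_derivative u (at z) h * \<psi> z)) (at z)"
    if "z \<in> S" for z
    unfolding F_def using has_derivative_mult[OF hu[OF that] hp[of z]] by simp
  have FD: "frechet_derivative F (at z) v = E z" for z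
  proof (cases "z \<in> S")
    case True
    then show ?thesis using frechet_derivative_at[OF dF[OF True], symmetric] by (simp add: E_def Dp_def Du_def)
  next
    case False
    then have "z \<notin> K" using K by auto
    then show ?thesis using deriv_zero_outside[of K F z, OF Kc F0] False by (simp add: E_def)
  qed
  have Fdiff: "F differentiable (at z)" for z
  proof (cases "z \<in> S")
    case True then show ?thesis using dF[OF True] unfolding differentiable_def by blast
  next
    case False
    then have "z \<notin> K" using K by auto
    then show ?thesis using deriv_zero_outside(2)[of K F z, OF Kc F0 \<open>z \<notin> K\<close>] unfolding differentiable_def by blast
  qed
  have cuS: "continuous_on S u"
    using du by (simp add: differentiable_imp_continuous_within continuous_at_imp_continuous_on)
  have cpsiU: "continuous_on UNIV \<psi>"
    using dpsi by (simp add: differentiable_imp_continuous_within continuous_at_imp_continuous_on)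
  have cDp: "continuous_on A Dp" for A using cpsi continuous_on_subset unfolding Dp_def by blast
  have cp: "continuous_on A \<psi>" for A using cpsiU continuous_on_subset by blast
  have c1: "continuous_on S (\<lambda>z. u z * Dp z)" by (intro continuous_intros cuS cDp)
  have c2: "continuous_on S (\<lambda>z. Du z * \<psi> z)" using cu unfolding Du_def by (intro continuous_intros cp) auto
  have cE: "continuous_on UNIV E"
  proof -
    have "continuous_on S E"
      using continuous_on_add[OF c1 c2] by (rule continuous_on_eq) (simp add: E_def)
    moreover have "continuous_on (-K) E"
      by (rule continuous_on_eq[OF continuous_on_const[of _ 0]]) (use Dp0 K(3) in \<open>auto simp: E_def\<close>)
    ultimately have "continuous_on (S \<union> -K) E"
      using S Kc by (intro continuous_on_open_Un) auto
    moreover have "S \<union> -K = UNIV" using K by auto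
    ultimately show ?thesis by simp
  qed
  have I0: "integral\<^sup>L lborel E = 0"
    using int_deriv_zero[OF Fdiff _ K(1) F0, of v] cE FD by simp
  define a where "a = (\<lambda>z. indicator K z *\<^sub>R (u z * Dp z))"
  define b where "b = (\<lambda>z. indicator K z *\<^sub>R (Du z * \<psi> z))"
  have ia: "integrable lborel a" unfolding a_def
    using K c1 by (intro borel_integrable_compact) (auto intro: continuous_on_subset)
  have ib: "integrable lborel b" unfolding b_def
    using K c2 by (intro borel_integrable_compact) (auto intro: continuous_on_subset)
  have ma: "a \<in> borel_measurable borel" unfolding a_def
    using Kc K c1 by (intro borel_measurable_continuous_on_indicator) (auto intro: continuous_on_subset)
  have mb: "b \<in> borel_measurable borel" unfolding b_def
    using Kc K c2 by (intro borel_measurable_continuous_on_indicator) (auto intro: continuous_on_subset)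
  have Eab: "E = (\<lambda>z. a z + b z)"
    using K Dp0 by (auto simp: E_def a_def b_def fun_eq_iff indicator_def)
  have ab0: "integral\<^sup>L lborel a + integral\<^sup>L lborel b = 0"
    using I0 ia ib by (simp add: Eab)
  have ea: "(\<lambda>z. indicator S z *\<^sub>R (u z * Dp z)) = a"
    using K Dp0 by (auto simp: a_def fun_eq_iff indicator_def)
  have eb: "(\<lambda>z. indicator S z *\<^sub>R (Du z * \<psi> z)) = b"
    using K by (auto simp: b_def fun_eq_iff indicator_def)
  have ma': "a \<in> borel_measurable lborel" using ma by simp
  have mb': "b \<in> borel_measurable lborel" using mb by simp
  have la: "integrable lebesgue a" using integrable_completion[OF ma'] ia by simp
  have lb: "integrable lebesgue b" using integrable_completion[OF mb'] ib by simp
  show "set_integrable lebesgue S (\<lambda>z. u z * frechet_derivative \<psi> (at z) v)"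
    unfolding set_integrable_def using la ea unfolding Dp_def by simp
  show "set_integrable lebesgue S (\<lambda>z. frechet_derivative u (at z) v * \<psi> z)"
    unfolding set_integrable_def using lb eb unfolding Du_def by simp
  have "(LINT z:S|lebesgue. u z * Dp z) = integral\<^sup>L lborel a"
    unfolding set_lebesgue_integral_def ea using integral_completion[OF ma'] by simp
  moreover have "(LINT z:S|lebesgue. Du z * \<psi> z) = integral\<^sup>L lborel b"
    unfolding set_lebesgue_integral_def eb using integral_completion[OF mb'] by simp
  ultimately show "(LINT z:S|lebesgue. u z * frechet_derivative \<psi> (at z) v) =
       - (LINT z:S|lebesgue. frechet_derivative u (at z) v * \<psi> z)"
    using ab0 unfolding Dp_def Du_def by linarith
qed

fun Ck1 :: "nat \<Rightarrow> (real \<Rightarrow> real) \<Rightarrow> bool" where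
  "Ck1 0 f = continuous_on UNIV f"
| "Ck1 (Suc k) f = (\<exists>f'. (\<forall>x. (f has_real_derivative f' x) (at x)) \<and> Ck1 k f')"

lemma Ck1_cont: "Ck1 k f \<Longrightarrow> continuous_on UNIV f"
proof (cases k)
  case (Suc n)
  assume "Ck1 k f"
  then obtain f' where "\<forall>x. (f has_real_derivative f' x) (at x)" using Suc by auto
  then have "\<And>x. isCont f x" using DERIV_isCont by blast
  then show ?thesis by (simp add: continuous_at_imp_continuous_on)
qed simp

lemma Ck1_mono: "Ck1 (Suc k) f \<Longrightarrow> Ck1 k f"
proof (induction k arbitrary: f)
  case 0 then show ?case using Ck1_cont[OF "0"] by simp
next
  case (Suc k)
  then obtain f' where "\<forall>x. (f has_real_derivative f' x) (at x)" "Ck1 (Suc k) f'" by auto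
  then show ?case using Suc.IH by auto
qed

lemma Ck1_const: "Ck1 k (\<lambda>_. c)"
proof (induction k arbitrary: c)
  case (Suc k) then show ?case by (auto intro!: exI[of _ "\<lambda>_. 0"])
qed simp

lemma Ck1_add: "Ck1 k f \<Longrightarrow> Ck1 k g \<Longrightarrow> Ck1 k (\<lambda>x. f x + g x)"
proof (induction k arbitrary: f g)
  case 0 then show ?case by (auto intro: continuous_on_add)
next
  case (Suc k)
  from Suc.prems obtain f' g' where "\<forall>x. (f has_real_derivative f' x) (at x)" "Ck1 k f'"
     "\<forall>x. (g has_real_derivative g' x) (at x)" "Ck1 k g'" by auto
  then show ?case using Suc.IH by (auto intro!: exI[of _ "\<lambda>x. f' x + g' x"] derivative_intros)
qed

lemma Ck1_mult: "Ck1 k f \<Longrightarrow> Ck1 k g \<Longrightarrow> Ck1 k (\<lambda>x. f x * g x)"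
proof (induction k arbitrary: f g)
  case 0 then show ?case by (auto intro: continuous_on_mult)
next
  case (Suc k)
  from Suc.prems obtain f' g' where d: "\<forall>x. (f has_real_derivative f' x) (at x)" "Ck1 k f'"
     "\<forall>x. (g has_real_derivative g' x) (at x)" "Ck1 k g'" by auto
  have "Ck1 k f" "Ck1 k g" using Suc.prems Ck1_mono by auto
  then have "Ck1 k (\<lambda>x. f' x * g x + f x * g' x)" using d Suc.IH Ck1_add by auto
  moreover have "((\<lambda>x. f x * g x) has_real_derivative f' x * g x + f x * g' x) (at x)" for x
    using d by (auto intro!: derivative_eq_intros)
  ultimately show ?case by (auto intro!: exI[of _ "\<lambda>x. f' x * g x + f x * g' x"])
qed

lemma Ck1_affine: "Ck1 k f \<Longrightarrow> Ck1 k (\<lambda>x. f (c * x + d))"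
proof (induction k arbitrary: f)
  case 0 then show ?case by (auto intro!: continuous_on_compose2[of UNIV f] continuous_intros)
next
  case (Suc k)
  from Suc.prems obtain f' where d: "\<forall>x. (f has_real_derivative f' x) (at x)" "Ck1 k f'" by auto
  have "Ck1 k (\<lambda>x. c * f' (c * x + d))" using Suc.IH[OF d(2)] Ck1_mult Ck1_const by auto
  moreover have "((\<lambda>x. f (c * x + d)) has_real_derivative c * f' (c * x + d)) (at x)" for x
  proof -
    have "((\<lambda>x. c * x + d) has_real_derivative c) (at x)" by (auto intro!: derivative_eq_intros)
    from DERIV_chain2[OF d(1)[rule_format] this] show ?thesis by (simp add: mult.commute)
  qed
  ultimately show ?case by (auto intro!: exI[of _ "\<lambda>x. c * f' (c * x + d)"])
qed

lemma poly_exp_lim: "((\<lambda>y. poly P y * exp (- y)) \<longlongrightarrow> (0::real)) at_top"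
proof -
  have "((\<lambda>y. \<Sum>i\<le>degree P. coeff P i * (y ^ i / exp y)) \<longlongrightarrow> (\<Sum>i\<le>degree P. coeff P i * 0)) at_top"
    by (intro tendsto_sum tendsto_mult tendsto_const tendsto_power_div_exp_0)
  moreover have "(\<lambda>y. \<Sum>i\<le>degree P. coeff P i * (y ^ i / exp y)) = (\<lambda>y. poly P y * exp (- y))"
    by (auto simp: poly_altdef sum_divide_distrib exp_minus field_simps)
  ultimately show ?thesis by simp
qed

definition gP :: "real poly \<Rightarrow> real \<Rightarrow> real" where
  "gP P x = (if x > 0 then poly P (1 / x) * exp (- (1 / x)) else 0)"

definition nextP :: "real poly \<Rightarrow> real poly" where
  "nextP P = [:0, 0, 1:] * (P - pderiv P)"

lemma gP_deriv: "(gP P has_real_derivative gP (nextP P) x) (at x)"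
proof -
  consider "x > 0" | "x < 0" | "x = 0" by linarith
  then show ?thesis
  proof cases
    case 1
    have d: "((\<lambda>x. poly P (1 / x) * exp (- (1 / x))) has_real_derivative gP (nextP P) x) (at x)"
    proof -
      have "((\<lambda>x. poly P (1 / x) * exp (- (1 / x))) has_real_derivative
          poly (pderiv P) (1 / x) * (- 1 / x^2) * exp (- (1 / x)) + poly P (1 / x) * (exp (- (1 / x)) * (1 / x^2))) (at x)"
        using 1 by (auto intro!: derivative_eq_intros DERIV_chain2[OF poly_DERIV] simp: power2_eq_square)
      moreover have "poly (pderiv P) (1 / x) * (- 1 / x^2) * exp (- (1 / x)) + poly P (1 / x) * (exp (- (1 / x)) * (1 / x^2))
          = gP (nextP P) x"
        using 1 by (simp add: gP_def nextP_def algebra_simps power2_eq_square)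
      ultimately show ?thesis by simp
    qed
    show ?thesis
      by (rule has_field_derivative_transform_within_open[OF d, of "{0<..}"]) (use 1 in \<open>auto simp: gP_def\<close>)
  next
    case 2
    have d: "((\<lambda>x. 0) has_real_derivative gP (nextP P) x) (at x)" using 2 by (simp add: gP_def)
    show ?thesis
      by (rule has_field_derivative_transform_within_open[OF d, of "{..<0}"]) (use 2 in \<open>auto simp: gP_def\<close>)
  next
    case 3
    have "((\<lambda>h. (gP P (0 + h) - gP P 0) / h) \<longlongrightarrow> 0) (at 0)"
    proof (rule filterlim_split_at)
      show "((\<lambda>h. (gP P (0 + h) - gP P 0) / h) \<longlongrightarrow> 0) (at_left 0)"
        by (rule tendsto_eventually) (auto simp: gP_def eventually_at_left_field intro: exI[of _ "-1"])
      have "((\<lambda>y. poly (pCons 0 P) y * exp (- y)) \<longlongrightarrow> (0::real)) at_top" by (rule poly_exp_lim)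
      then have "((\<lambda>h. poly (pCons 0 P) (inverse h) * exp (- inverse h)) \<longlongrightarrow> (0::real)) (at_right 0)"
        by (simp add: filterlim_at_top_to_right)
      then show "((\<lambda>h. (gP P (0 + h) - gP P 0) / h) \<longlongrightarrow> 0) (at_right 0)"
        apply (rule Lim_transform_eventually)
        by (auto simp: gP_def eventually_at_right_field divide_inverse intro!: exI[of _ 1])
    qed
    then have "(gP P has_real_derivative 0) (at 0)" by (simp add: has_field_derivative_iff)
    then show ?thesis using 3 by (simp add: gP_def)
  qed
qed

lemma gP_Ck1: "Ck1 k (gP P)"
proof (induction k arbitrary: P)
  case 0
  have "\<And>x. isCont (gP P) x" using gP_deriv DERIV_isCont by blast
  then show ?case by (simp add: continuous_at_imp_continuous_on)
next
  case (Suc k) then show ?case using gP_deriv by auto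
qed

definition ebump :: "real \<Rightarrow> real" where "ebump x = (if x > 0 then exp (- (1 / x)) else 0)"

lemma ebump_gP: "ebump = gP 1" by (auto simp: ebump_def gP_def fun_eq_iff)
lemma ebump_Ck1: "Ck1 k ebump" by (simp add: ebump_gP gP_Ck1)
lemma ebump_range: "0 \<le> ebump x" "ebump x \<le> 1" by (auto simp: ebump_def)
lemma ebump_pos: "ebump x \<noteq> 0 \<longleftrightarrow> x > 0" by (auto simp: ebump_def)

lemma has_derivative_fRe:
  assumes "(f has_real_derivative f') (at (Re z))"
  shows "((\<lambda>z. f (Re z)) has_derivative (\<lambda>h. f' * Re h)) (at z)"
proof -
  have "(Re has_derivative Re) (at z)" by (rule bounded_linear_imp_has_derivative[OF bounded_linear_Re])
  from has_derivative_compose[OF this assms[unfolded has_field_derivative_def]] show ?thesis .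
qed

lemma has_derivative_fIm:
  assumes "(f has_real_derivative f') (at (Im z))"
  shows "((\<lambda>z. f (Im z)) has_derivative (\<lambda>h. f' * Im h)) (at z)"
proof -
  have "(Im has_derivative Im) (at z)" by (rule bounded_linear_imp_has_derivative[OF bounded_linear_Im])
  from has_derivative_compose[OF this assms[unfolded has_field_derivative_def]] show ?thesis .
qed

lemma cont_ReIm:
  fixes f g :: "real \<Rightarrow> real"
  assumes "continuous_on UNIV f" "continuous_on UNIV g"
  shows "continuous_on UNIV (\<lambda>z. f (Re z) * g (Im z))"
proof -
  have "continuous_on UNIV (\<lambda>z. f (Re z))"
    by (rule continuous_on_compose2[OF assms(1) continuous_on_Re[OF continuous_on_id]]) auto
  moreover have "continuous_on UNIV (\<lambda>z. g (Im z))"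
    by (rule continuous_on_compose2[OF assms(2) continuous_on_Im[OF continuous_on_id]]) auto
  ultimately show ?thesis by (rule continuous_on_mult')
qed

lemma prod_Ck_real: "Ck1 n f \<Longrightarrow> Ck1 n g \<Longrightarrow> Ck_real n (\<lambda>z. f (Re z) * g (Im z))"
proof (induction n arbitrary: f g)
  case 0 then show ?case using cont_ReIm by simp
next
  case (Suc n)
  from Suc.prems obtain f' g' where d: "\<forall>x. (f has_real_derivative f' x) (at x)" "Ck1 n f'"
     "\<forall>x. (g has_real_derivative g' x) (at x)" "Ck1 n g'" by auto
  have nf: "Ck1 n f" "Ck1 n g" using Suc.prems Ck1_mono by auto
  have hT: "((\<lambda>z. f (Re z) * g (Im z)) has_derivative
     (\<lambda>h. f (Re z) * (g' (Im z) * Im h) + f' (Re z) * Re h * g (Im z))) (at z)" for z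
    using has_derivative_mult[OF has_derivative_fRe[OF d(1)[rule_format]] has_derivative_fIm[OF d(3)[rule_format]]]
    by simp
  have px: "pdx (\<lambda>z. f (Re z) * g (Im z)) = (\<lambda>z. f' (Re z) * g (Im z))"
    unfolding pdx_def fun_eq_iff by (simp add: frechet_derivative_at[OF hT, symmetric])
  have py: "pdy (\<lambda>z. f (Re z) * g (Im z)) = (\<lambda>z. f (Re z) * g' (Im z))"
    unfolding pdy_def fun_eq_iff by (simp add: frechet_derivative_at[OF hT, symmetric])
  have "(\<lambda>z. f (Re z) * g (Im z)) differentiable (at z)" for z using hT differentiable_def by blast
  moreover have "continuous_on UNIV (\<lambda>z. f (Re z) * g (Im z))"
    using cont_ReIm Ck1_cont Suc.prems by blast
  ultimately show ?case using Suc.IH[OF d(2) nf(2)] Suc.IH[OF nf(1) d(4)] px py by simp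
qed

lemma smooth_prod: "(\<And>n. Ck1 n f) \<Longrightarrow> (\<And>n. Ck1 n g) \<Longrightarrow> smooth_real (\<lambda>z. f (Re z) * g (Im z))"
  unfolding smooth_real_def using prod_Ck_real by blast

definition beta :: "real \<Rightarrow> real \<Rightarrow> real \<Rightarrow> real \<Rightarrow> real" where
  "beta \<alpha> \<beta> m x = ebump (m * x + (- m * \<alpha>)) * ebump ((- m) * x + m * \<beta>)"

lemma beta_Ck1: "Ck1 k (beta \<alpha> \<beta> m)"
  unfolding beta_def by (intro Ck1_mult Ck1_affine[OF ebump_Ck1])

lemma beta_nz: "m > 0 \<Longrightarrow> beta \<alpha> \<beta> m x \<noteq> 0 \<longleftrightarrow> \<alpha> < x \<and> x < \<beta>"
  by (auto simp: beta_def ebump_pos algebra_simps)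

lemma beta_range: "0 \<le> beta \<alpha> \<beta> m x" "beta \<alpha> \<beta> m x \<le> 1"
  using ebump_range by (auto simp: beta_def intro: mult_le_one)

lemma beta_lim:
  "(\<lambda>n. beta \<alpha> \<beta> (real (Suc n)) x) \<longlonglongrightarrow> (if \<alpha> < x \<and> x < \<beta> then 1 else 0)"
proof (cases "\<alpha> < x \<and> x < \<beta>")
  case True
  have e: "ebump (m * c) = exp (- ((1 / c) * inverse m))" if "m > 0" "c > 0" for m c :: real
    using that by (simp add: ebump_def field_simps)
  have l: "(\<lambda>n. exp (- ((1 / c) * inverse (real (Suc n))))) \<longlonglongrightarrow> 1" for c :: real
  proof -
    have "(\<lambda>n. exp (- ((1 / c) * inverse (real (Suc n))))) \<longlonglongrightarrow> exp (- ((1 / c) * 0))"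
      by (intro tendsto_intros LIMSEQ_inverse_real_of_nat)
    then show ?thesis by simp
  qed
  have eq: "beta \<alpha> \<beta> (real (Suc n)) x = exp (- ((1 / (x - \<alpha>)) * inverse (real (Suc n)))) * exp (- ((1 / (\<beta> - x)) * inverse (real (Suc n))))" for n
  proof -
    have "beta \<alpha> \<beta> (real (Suc n)) x = ebump (real (Suc n) * (x - \<alpha>)) * ebump (real (Suc n) * (\<beta> - x))"
      by (simp add: beta_def algebra_simps)
    then show ?thesis using True by (simp add: e)
  qed
  show ?thesis using True tendsto_mult[OF l l] unfolding eq by simp
next
  case False
  then have "beta \<alpha> \<beta> (real (Suc n)) x = 0" for n using beta_nz[of "real (Suc n)"] by auto
  then have z: "(\<lambda>n. beta \<alpha> \<beta> (real (Suc n)) x) = (\<lambda>n. 0)" by auto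
  have e: "(if \<alpha> < x \<and> x < \<beta> then 1 else 0) = (0::real)" using False by simp
  show ?thesis unfolding e z by (rule tendsto_const)
qed

definition tpsi :: "complex \<Rightarrow> complex \<Rightarrow> real \<Rightarrow> complex \<Rightarrow> real" where
  "tpsi a b m z = beta (Re a) (Re b) m (Re z) * beta (Im a) (Im b) m (Im z)"

lemma tpsi_smooth: "smooth_real (tpsi a b m)"
  unfolding tpsi_def by (intro smooth_prod beta_Ck1)

lemma tpsi_supp: "m > 0 \<Longrightarrow> {z. tpsi a b m z \<noteq> 0} \<subseteq> box a b"
  by (auto simp: tpsi_def beta_nz in_box_complex_iff)

lemma tpsi_test: "m > 0 \<Longrightarrow> cbox a b \<subseteq> D \<Longrightarrow> test_fun D (tpsi a b m)"
proof -
  assume m: "m > 0" and ab: "cbox a b \<subseteq> D"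
  have cl: "closure {z. tpsi a b m z \<noteq> 0} \<subseteq> cbox a b"
    by (rule closure_minimal[OF subset_trans[OF tpsi_supp[OF m] box_subset_cbox] closed_cbox])
  have "compact (cbox a b \<inter> closure {z. tpsi a b m z \<noteq> 0})"
    by (intro compact_Int_closed compact_cbox closed_closure)
  moreover have "cbox a b \<inter> closure {z. tpsi a b m z \<noteq> 0} = closure {z. tpsi a b m z \<noteq> 0}" using cl by blast
  ultimately show ?thesis unfolding test_fun_def using ab tpsi_smooth cl by auto
qed

lemma tpsi_range: "0 \<le> tpsi a b m z" "tpsi a b m z \<le> 1"
  using beta_range by (auto simp: tpsi_def intro: mult_le_one)

lemma tpsi_lim: "(\<lambda>n. tpsi a b (real (Suc n)) z) \<longlonglongrightarrow> indicator (box a b) z"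
proof -
  have "(\<lambda>n. tpsi a b (real (Suc n)) z) \<longlonglongrightarrow>
     (if Re a < Re z \<and> Re z < Re b then 1 else 0) * (if Im a < Im z \<and> Im z < Im b then 1 else 0)"
    unfolding tpsi_def by (intro tendsto_mult beta_lim)
  moreover have "indicator (box a b) z = (if Re a < Re z \<and> Re z < Re b then 1 else 0) * (if Im a < Im z \<and> Im z < Im b then (1::real) else 0)"
    by (simp add: indicator_def in_box_complex_iff)
  ultimately show ?thesis by (simp only:)
qed

lemma tpsi_cont: "continuous_on UNIV (tpsi a b m)"
  using tpsi_smooth[of a b m] unfolding smooth_real_def by (metis Ck_real.simps(1))

lemma tpsi_meas: "tpsi a b m \<in> borel_measurable lebesgue"
proof -
  have "tpsi a b m \<in> borel_measurable borel" by (rule borel_measurable_continuous_onI[OF tpsi_cont])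
  then have "tpsi a b m \<in> borel_measurable lborel" by simp
  then show ?thesis by (rule measurable_completion)
qed

lemma box_int_zero:
  fixes h :: "complex \<Rightarrow> real"
  assumes ab: "cbox a b \<subseteq> D"
    and loc: "set_integrable lebesgue (cbox a b) h"
    and zero: "\<And>\<psi>. test_fun D \<psi> \<Longrightarrow> (LINT z:D|lebesgue. h z * \<psi> z) = 0"
  shows "integral (cbox a b) h = 0"
proof -
  define g where "g = (\<lambda>z. indicator (cbox a b) z *\<^sub>R h z)"
  have ig: "integrable lebesgue g" using loc by (simp add: set_integrable_def g_def)
  have mg: "g \<in> borel_measurable lebesgue" using ig by (rule borel_measurable_integrable)
  define s where "s = (\<lambda>n z. g z * tpsi a b (real (Suc n)) z)"
  have ms: "s n \<in> borel_measurable lebesgue" for n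
    unfolding s_def using mg tpsi_meas by (rule borel_measurable_times)
  have eqs: "(LINT z:D|lebesgue. h z * tpsi a b m z) = integral\<^sup>L lebesgue (\<lambda>z. g z * tpsi a b m z)"
    if m: "m > 0" for m
  proof -
    have pw: "indicator D z *\<^sub>R (h z * tpsi a b m z) = g z * tpsi a b m z" for z
    proof (cases "tpsi a b m z = 0")
      case False
      then have "z \<in> box a b" using tpsi_supp[OF m] by blast
      then have "z \<in> cbox a b" "z \<in> D" using box_subset_cbox ab by blast+
      then show ?thesis by (simp add: g_def)
    qed simp
    have eqf: "(\<lambda>z. indicator D z *\<^sub>R (h z * tpsi a b m z)) = (\<lambda>z. g z * tpsi a b m z)"
      using pw by (rule ext)
    show ?thesis unfolding set_lebesgue_integral_def eqf by (rule refl)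
  qed
  have s0: "integral\<^sup>L lebesgue (s n) = 0" for n
    using eqs[of "real (Suc n)"] zero[OF tpsi_test[OF _ ab]] unfolding s_def by simp
  have lim: "(\<lambda>n. s n z) \<longlonglongrightarrow> g z * indicator (box a b) z" for z
    unfolding s_def by (intro tendsto_mult tendsto_const tpsi_lim)
  have bnd: "norm (s n z) \<le> norm (g z)" for n z
    using tpsi_range[of a b "real (Suc n)" z] unfolding s_def
    by (simp add: abs_mult mult_right_le_one_le)
  have mlim: "(\<lambda>z. g z * indicator (box a b) z) \<in> borel_measurable lebesgue"
    by (intro borel_measurable_times mg borel_measurable_indicator) (auto intro: lmeasurable_box[THEN fmeasurableD])
  have "(\<lambda>n. integral\<^sup>L lebesgue (s n)) \<longlonglongrightarrow> integral\<^sup>L lebesgue (\<lambda>z. g z * indicator (box a b) z)"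
    by (rule integral_dominated_convergence[where w="\<lambda>z. norm (g z)"])
       (use mlim ms ig lim bnd in auto)
  then have "(\<lambda>n. 0::real) \<longlonglongrightarrow> integral\<^sup>L lebesgue (\<lambda>z. g z * indicator (box a b) z)"
    using s0 by simp
  then have I0: "integral\<^sup>L lebesgue (\<lambda>z. g z * indicator (box a b) z) = 0"
    by (simp add: LIMSEQ_const_iff)
  have eqb: "(\<lambda>z. g z * indicator (box a b) z) = (\<lambda>z. indicator (box a b) z *\<^sub>R h z)"
    using box_subset_cbox[of a b] by (auto simp: g_def indicator_def fun_eq_iff)
  have sib: "set_integrable lebesgue (box a b) h"
    by (rule set_integrable_subset[OF loc]) (auto simp: box_subset_cbox)
  have "(LINT z:box a b|lebesgue. h z) = 0" using I0 eqb unfolding set_lebesgue_integral_def by simp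
  then have "integral (box a b) h = 0" using set_lebesgue_integral_eq_integral(2)[OF sib] by simp
  then show ?thesis by (simp add: integral_open_interval)
qed

lemma One_complex: "(One :: complex) = 1 + \<i>"
  by (simp add: Basis_complex_def)

lemma box_ae_zero:
  fixes h :: "complex \<Rightarrow> real"
  assumes ab: "cbox a b \<subseteq> D"
    and loc: "\<And>c d. cbox c d \<subseteq> D \<Longrightarrow> set_integrable lebesgue (cbox c d) h"
    and zero: "\<And>\<psi>. test_fun D \<psi> \<Longrightarrow> (LINT z:D|lebesgue. h z * \<psi> z) = 0"
  shows "\<exists>N. negligible N \<and> (\<forall>x\<in>cbox a b - N. h x = 0)"
proof -
  define f where "f = (\<lambda>z. indicator (cbox a b) z *\<^sub>R h z)"
  have intf: "integrable lebesgue f" using loc[OF ab] by (simp add: set_integrable_def f_def)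
  have "f integrable_on cbox c d" for c d
  proof -
    have "set_integrable lebesgue (cbox c d) f"
      unfolding set_integrable_def by (rule integrable_mult_indicator[OF _ intf]) simp
    then show ?thesis by (rule set_lebesgue_integral_eq_integral(1))
  qed
  then obtain N where N: "negligible N"
    and key: "\<And>x e. \<lbrakk>x \<notin> N; 0 < e\<rbrakk> \<Longrightarrow> \<exists>d>0. \<forall>\<delta>. 0 < \<delta> \<and> \<delta> < d \<longrightarrow>
        norm (integral (cbox x (x + \<delta> *\<^sub>R One)) f /\<^sub>R \<delta> ^ DIM(complex) - f x) < e"
    using integrable_ccontinuous_explicit[of f] by metis
  have "h x = 0" if x: "x \<in> box a b" "x \<notin> N" for x
  proof (rule ccontr)
    assume hx: "h x \<noteq> 0"
    have "x \<in> cbox a b" using x(1) box_subset_cbox by blast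
    then have fx: "f x = h x" by (simp add: f_def)
    obtain d where d: "d > 0" and dk: "\<And>\<delta>. 0 < \<delta> \<and> \<delta> < d \<Longrightarrow>
        norm (integral (cbox x (x + \<delta> *\<^sub>R One)) f /\<^sub>R \<delta> ^ DIM(complex) - f x) < \<bar>h x\<bar>"
      using key[OF x(2), of "\<bar>h x\<bar>"] hx by auto
    define \<delta>0 where "\<delta>0 = min (Re b - Re x) (Im b - Im x)"
    have d0: "\<delta>0 > 0" using x(1) by (auto simp: \<delta>0_def in_box_complex_iff)
    define \<delta> where "\<delta> = min (d / 2) (\<delta>0 / 2)"
    have dpos: "0 < \<delta>" "\<delta> < d" using d d0 by (auto simp: \<delta>_def)
    have sub: "cbox x (x + \<delta> *\<^sub>R One) \<subseteq> cbox a b"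
    proof
      fix z assume "z \<in> cbox x (x + \<delta> *\<^sub>R One)"
      then have "Re x \<le> Re z" "Re z \<le> Re x + \<delta>" "Im x \<le> Im z" "Im z \<le> Im x + \<delta>"
        by (auto simp: in_cbox_complex_iff One_complex)
      moreover have "\<delta> < Re b - Re x" "\<delta> < Im b - Im x"
      proof -
        have "\<delta> \<le> \<delta>0 / 2" unfolding \<delta>_def by (rule min.cobounded2)
        moreover have "\<delta>0 \<le> Re b - Re x" unfolding \<delta>0_def by (rule min.cobounded1)
        moreover have "\<delta>0 \<le> Im b - Im x" unfolding \<delta>0_def by (rule min.cobounded2)
        ultimately show "\<delta> < Re b - Re x" "\<delta> < Im b - Im x" using d0 by linarith+
      qed
      ultimately show "z \<in> cbox a b" using x(1) by (auto simp: in_cbox_complex_iff in_box_complex_iff)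
    qed
    have "integral (cbox x (x + \<delta> *\<^sub>R One)) f = integral (cbox x (x + \<delta> *\<^sub>R One)) h"
      using sub by (intro integral_cong) (auto simp: f_def)
    also have "\<dots> = 0"
      using sub ab by (intro box_int_zero[OF _ loc zero]) auto
    finally have "norm (0 - f x) < \<bar>h x\<bar>" using dk[OF conjI[OF dpos]] by simp
    then show False using fx by simp
  qed
  then have "\<forall>x\<in>cbox a b - (N \<union> (cbox a b - box a b)). h x = 0" by blast
  moreover have "negligible (N \<union> (cbox a b - box a b))"
    using N negligible_frontier_interval by (rule negligible_Un)
  ultimately show ?thesis by blast
qed

lemma weak_zero_ae:
  fixes h :: "complex \<Rightarrow> real"
  assumes D: "open D"
    and loc: "\<And>c d. cbox c d \<subseteq> D \<Longrightarrow> set_integrable lebesgue (cbox c d) h"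
    and zero: "\<And>\<psi>. test_fun D \<psi> \<Longrightarrow> (LINT z:D|lebesgue. h z * \<psi> z) = 0"
  shows "\<exists>N. negligible N \<and> (\<forall>x\<in>D - N. h x = 0)"
proof -
  obtain \<D> where cD: "countable \<D>" and sD: "\<D> \<subseteq> Pow D" and bD: "\<And>X. X \<in> \<D> \<Longrightarrow> \<exists>a b. X = cbox a b"
    and uD: "\<Union>\<D> = D"
    using open_countable_Union_open_cbox[OF D] by metis
  have "\<forall>X\<in>\<D>. \<exists>N. negligible N \<and> (\<forall>x\<in>X - N. h x = 0)"
  proof
    fix X assume X: "X \<in> \<D>"
    then obtain a b where "X = cbox a b" using bD by blast
    then show "\<exists>N. negligible N \<and> (\<forall>x\<in>X - N. h x = 0)"
      using box_ae_zero[OF _ loc zero] X sD by blast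
  qed
  then obtain NN where NN: "\<And>X. X \<in> \<D> \<Longrightarrow> negligible (NN X) \<and> (\<forall>x\<in>X - NN X. h x = 0)"
    by metis
  have "negligible (\<Union>(NN ` \<D>))" using cD NN by (intro negligible_countable_Union) auto
  moreover have "\<forall>x\<in>D - \<Union>(NN ` \<D>). h x = 0" using NN uD by blast
  ultimately show ?thesis by blast
qed

lemma alg_inv:
  fixes a c B1 Bi :: complex
  assumes e1: "Re a *\<^sub>R B1 + Im a *\<^sub>R Bi = 1" and e2: "Re c *\<^sub>R B1 + Im c *\<^sub>R Bi = \<i>"
  shows "\<bar>Re a * Im c - Im a * Re c\<bar> * (sqrt ((Re B1)\<^sup>2 + (Re Bi)\<^sup>2) + sqrt ((Im B1)\<^sup>2 + (Im Bi)\<^sup>2))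
     = cmod a + cmod c"
proof -
  define J where "J = Re a * Im c - Im a * Re c"
  have r1: "Re a * Re B1 + Im a * Re Bi = 1" "Re a * Im B1 + Im a * Im Bi = 0"
    using arg_cong[OF e1, of Re] arg_cong[OF e1, of Im] by simp_all
  have r2: "Re c * Re B1 + Im c * Re Bi = 0" "Re c * Im B1 + Im c * Im Bi = 1"
    using arg_cong[OF e2, of Re] arg_cong[OF e2, of Im] by simp_all
  have s1: "J * Re B1 = Im c" "J * Re Bi = - Re c" "J * Im B1 = - Im a" "J * Im Bi = Re a"
    unfolding J_def using r1 r2 by algebra+
  have q1: "\<bar>J\<bar> * sqrt ((Re B1)\<^sup>2 + (Re Bi)\<^sup>2) = cmod c"
  proof -
    have "\<bar>J\<bar> * sqrt ((Re B1)\<^sup>2 + (Re Bi)\<^sup>2) = sqrt ((J * Re B1)\<^sup>2 + (J * Re Bi)\<^sup>2)"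
      by (simp add: real_sqrt_mult[symmetric] power_mult_distrib algebra_simps real_sqrt_abs[symmetric] del: real_sqrt_abs)
    also have "\<dots> = cmod c" using s1 by (simp add: cmod_def add.commute)
    finally show ?thesis .
  qed
  have q2: "\<bar>J\<bar> * sqrt ((Im B1)\<^sup>2 + (Im Bi)\<^sup>2) = cmod a"
  proof -
    have "\<bar>J\<bar> * sqrt ((Im B1)\<^sup>2 + (Im Bi)\<^sup>2) = sqrt ((J * Im B1)\<^sup>2 + (J * Im Bi)\<^sup>2)"
      by (simp add: real_sqrt_mult[symmetric] power_mult_distrib algebra_simps real_sqrt_abs[symmetric] del: real_sqrt_abs)
    also have "\<dots> = cmod a" using s1 by (simp add: cmod_def add.commute)
    finally show ?thesis .
  qed
  show ?thesis using q1 q2 unfolding J_def[symmetric] by (simp add: distrib_left)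
qed

lemma young_pt:
  fixes G t p :: real
  assumes p: "p > 1" and G: "G \<ge> 0" and t: "t > 0"
  shows "G powr (1 / p) \<le> (1 / p) * (G * t powr (1 - p)) + (1 - 1 / p) * t"
proof (cases "G = 0")
  case True then show ?thesis using p t by (simp add: field_simps)
next
  case False
  then have Gp: "G > 0" using G by simp
  have Y: "(G * t powr (1 - p)) powr (1 / p) * t powr (1 - 1 / p) \<le> (1 / p) * (G * t powr (1 - p)) + (1 - 1 / p) * t"
    using p Gp t by (intro Youngs_inequality_0) auto
  have "(G * t powr (1 - p)) powr (1 / p) * t powr (1 - 1 / p) = G powr (1 / p) * (t powr ((1 - p) / p) * t powr (1 - 1 / p))"
    using Gp t by (simp add: powr_mult powr_powr)
  also have "t powr ((1 - p) / p) * t powr (1 - 1 / p) = 1"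
    using t p by (simp add: powr_add[symmetric] field_simps)
  finally show ?thesis using Y by simp
qed

lemma holder_like:
  fixes G :: "complex \<Rightarrow> real" and p :: real
  assumes p: "p > 1" and D: "D \<in> lmeasurable"
    and iG: "set_integrable lebesgue D G" and G0: "\<And>z. z \<in> D \<Longrightarrow> G z \<ge> 0"
    and iGp: "set_integrable lebesgue D (\<lambda>z. G z powr (1 / p))"
  shows "(LINT z:D|lebesgue. G z powr (1 / p)) \<le> (measure lebesgue D) powr (1 - 1 / p) * (LINT z:D|lebesgue. G z) powr (1 / p)"
proof -
  define I where "I = (LINT z:D|lebesgue. G z powr (1 / p))"
  define E where "E = (LINT z:D|lebesgue. G z)"
  define A where "A = measure lebesgue D"
  have Dsets: "D \<in> sets lebesgue" using D by (simp add: fmeasurableD)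
  have Dfin: "emeasure lebesgue D \<noteq> \<infinity>" using D by (simp add: emeasure_eq_measure2)
  have E0: "E \<ge> 0" unfolding E_def set_lebesgue_integral_def
    using G0 by (intro Bochner_Integration.integral_nonneg) (auto simp: indicator_def)
  have A0: "A \<ge> 0" unfolding A_def by simp
  have bound: "I \<le> (1 / p) * (t powr (1 - p) * E) + (1 - 1 / p) * t * A" if t: "t > 0" for t
  proof -
    have ic: "set_integrable lebesgue D (\<lambda>z. (1 - 1 / p) * t)"
    proof -
      have ii: "integrable lebesgue (indicator D :: complex \<Rightarrow> real)"
        using Dsets Dfin by (intro integrable_real_indicator) (auto simp: less_top)
      show ?thesis unfolding set_integrable_def
        using integrable_mult_right[OF ii, of "(1 - 1 / p) * t"] by (simp add: mult.commute)
    qed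
    have i2: "set_integrable lebesgue D (\<lambda>z. (1 / p) * (G z * t powr (1 - p)) + (1 - 1 / p) * t)"
      using iG ic by (intro set_integral_add set_integrable_mult_right set_integrable_mult_left) auto
    have "I \<le> (LINT z:D|lebesgue. (1 / p) * (G z * t powr (1 - p)) + (1 - 1 / p) * t)"
      unfolding I_def using iGp i2 young_pt[OF p G0 t] by (intro set_integral_mono) auto
    also have "\<dots> = (LINT z:D|lebesgue. (1 / p) * (G z * t powr (1 - p))) + (LINT z:D|lebesgue. (1 - 1 / p) * t)"
      using iG ic by (intro set_integral_add) (auto intro: set_integrable_mult_right set_integrable_mult_left)
    also have "(LINT z:D|lebesgue. (1 / p) * (G z * t powr (1 - p))) = (1 / p) * (t powr (1 - p) * E)"
      unfolding E_def by (simp add: set_integral_mult_right set_integral_mult_left mult.commute)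
    also have "(LINT z:D|lebesgue. (1 - 1 / p) * t) = (1 - 1 / p) * t * A"
      unfolding A_def using Dsets Dfin by (simp add: set_integral_const)
    finally show ?thesis .
  qed
  consider "A = 0" | "E = 0" "A > 0" | "E > 0" "A > 0" using E0 A0 by linarith
  then have "I \<le> A powr (1 - 1 / p) * E powr (1 / p)"
  proof cases
    case 1
    have "emeasure lebesgue D = 0" using 1 D unfolding A_def by (simp add: emeasure_eq_measure2)
    then have Dn: "D \<in> null_sets lebesgue" using Dsets by (simp add: null_setsI)
    have "I = (LINT z:{}|lebesgue. G z powr (1 / p))" unfolding I_def
    proof (rule set_integral_cong_set)
      show "set_borel_measurable lebesgue D (\<lambda>z. G z powr (1 / p))"
        using iGp by (simp add: set_integrable_def set_borel_measurable_def borel_measurable_integrable)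
      show "set_borel_measurable lebesgue {} (\<lambda>z. G z powr (1 / p))" by (simp add: set_borel_measurable_def)
      show "AE x in lebesgue. (x \<in> {}) = (x \<in> D)" using AE_not_in[OF Dn] by auto
    qed
    then have "I = 0" by (simp add: set_lebesgue_integral_def)
    then show ?thesis by simp
  next
    case 2
    have "I \<le> 0"
    proof (rule ccontr)
      assume "\<not> I \<le> 0"
      then have Ip: "I > 0" by simp
      define t where "t = I / ((1 - 1 / p) * A + 1)"
      have "1 - 1 / p \<ge> 0" using p by (simp add: field_simps)
      then have c0: "(1 - 1 / p) * A \<ge> 0" using A0 by simp
      have tp: "t > 0" unfolding t_def using Ip c0 by simp
      have "I \<le> (1 - 1 / p) * t * A" using bound[OF tp] 2 by simp
      also have "\<dots> < I" unfolding t_def using Ip c0 by (simp add: field_simps)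
      finally show False by simp
    qed
    then show ?thesis using 2 by simp
  next
    case 3
    define r where "r = E / A"
    have rp: "r > 0" using 3 by (simp add: r_def)
    have Er: "E = A * r" using 3 by (simp add: r_def)
    define t where "t = r powr (1 / p)"
    have tp: "t > 0" using rp by (simp add: t_def)
    have "I \<le> (1 / p) * (t powr (1 - p) * E) + (1 - 1 / p) * t * A" by (rule bound[OF tp])
    also have "t powr (1 - p) * E = A * r powr (1 / p)"
    proof -
      have "t powr (1 - p) * E = A * (r powr ((1 - p) / p) * r powr 1)"
        unfolding t_def Er using rp by (simp add: powr_powr)
      also have "r powr ((1 - p) / p) * r powr 1 = r powr (1 / p)"
      proof -
        have ex: "(1 - p) / p + 1 = 1 / p" using p by (simp add: field_simps)
        show ?thesis by (subst powr_add[symmetric]) (simp only: ex)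
      qed
      finally show ?thesis .
    qed
    also have "(1 / p) * (A * r powr (1 / p)) + (1 - 1 / p) * t * A = A * r powr (1 / p)"
      unfolding t_def by (simp add: algebra_simps)
    also have "A * r powr (1 / p) = A powr (1 - 1 / p) * E powr (1 / p)"
    proof -
      have "A powr (1 - 1 / p) * E powr (1 / p) = A powr (1 - 1 / p) * A powr (1 / p) * r powr (1 / p)"
        unfolding Er using 3 rp by (simp add: powr_mult)
      also have "A powr (1 - 1 / p) * A powr (1 / p) = A" using 3 by (simp add: powr_add[symmetric])
      finally show ?thesis by simp
    qed
    finally show ?thesis by simp
  qed
  then show ?thesis unfolding I_def E_def A_def .
qed

lemma Re_comp_deriv:
  assumes "f differentiable (at z)"
  shows "((\<lambda>z. Re (f z)) has_derivative (\<lambda>h. Re (frechet_derivative f (at z) h))) (at z)"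
    "((\<lambda>z. Im (f z)) has_derivative (\<lambda>h. Im (frechet_derivative f (at z) h))) (at z)"
  using bounded_linear.has_derivative[OF bounded_linear_Re, of f "frechet_derivative f (at z)" "at z"]
    bounded_linear.has_derivative[OF bounded_linear_Im, of f "frechet_derivative f (at z)" "at z"]
    assms frechet_derivative_works by blast+

lemma Re_comp_frechet:
  assumes "f differentiable (at z)"
  shows "frechet_derivative (\<lambda>z. Re (f z)) (at z) h = Re (frechet_derivative f (at z) h)"
    "frechet_derivative (\<lambda>z. Im (f z)) (at z) h = Im (frechet_derivative f (at z) h)"
    "(\<lambda>z. Re (f z)) differentiable (at z)" "(\<lambda>z. Im (f z)) differentiable (at z)"
proof -
  note d1 = Re_comp_deriv(1)[OF assms] and d2 = Re_comp_deriv(2)[OF assms]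
  show "frechet_derivative (\<lambda>z. Re (f z)) (at z) h = Re (frechet_derivative f (at z) h)"
    unfolding frechet_derivative_at[OF d1, symmetric] by (rule refl)
  show "frechet_derivative (\<lambda>z. Im (f z)) (at z) h = Im (frechet_derivative f (at z) h)"
    unfolding frechet_derivative_at[OF d2, symmetric] by (rule refl)
  show "(\<lambda>z. Re (f z)) differentiable (at z)" using d1 unfolding differentiable_def by blast
  show "(\<lambda>z. Im (f z)) differentiable (at z)" using d2 unfolding differentiable_def by blast
qed

lemma test_fun_facts:
  assumes "test_fun D \<psi>"
  shows "\<And>z. \<psi> differentiable (at z)"
    "continuous_on UNIV (\<lambda>z. frechet_derivative \<psi> (at z) 1)"
    "continuous_on UNIV (\<lambda>z. frechet_derivative \<psi> (at z) \<i>)"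
    "continuous_on UNIV \<psi>"
    "compact (closure {z. \<psi> z \<noteq> 0})" "closure {z. \<psi> z \<noteq> 0} \<subseteq> D"
    "\<And>z. z \<notin> closure {z. \<psi> z \<noteq> 0} \<Longrightarrow> \<psi> z = 0"
proof -
  have "Ck_real (Suc (Suc 0)) \<psi>" using assms unfolding test_fun_def smooth_real_def by blast
  then have c: "\<forall>z. \<psi> differentiable (at z)" "continuous_on UNIV (pdx \<psi>)" "continuous_on UNIV (pdy \<psi>)"
     "continuous_on UNIV \<psi>"
    unfolding Ck_real.simps by blast+
  show "\<And>z. \<psi> differentiable (at z)" using c by blast
  show "continuous_on UNIV (\<lambda>z. frechet_derivative \<psi> (at z) 1)" using c(2) unfolding pdx_def .
  show "continuous_on UNIV (\<lambda>z. frechet_derivative \<psi> (at z) \<i>)" using c(3) unfolding pdy_def .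
  show "continuous_on UNIV \<psi>" by (rule c(4))
  show "compact (closure {z. \<psi> z \<noteq> 0})" "closure {z. \<psi> z \<noteq> 0} \<subseteq> D"
    using assms unfolding test_fun_def by simp_all
  show "\<psi> z = 0" if "z \<notin> closure {z. \<psi> z \<noteq> 0}" for z
  proof (rule ccontr)
    assume "\<psi> z \<noteq> 0"
    then have "z \<in> {z. \<psi> z \<noteq> 0}" by simp
    then have "z \<in> closure {z. \<psi> z \<noteq> 0}" by (rule closure_subset[THEN subsetD])
    with that show False by simp
  qed
qed

lemma cont_setmeas:
  fixes F :: "complex \<Rightarrow> real"
  assumes "open D" "continuous_on D F"
  shows "set_borel_measurable lebesgue D F"
proof -
  have "(\<lambda>x. indicator D x *\<^sub>R F x) \<in> borel_measurable borel"
    using assms by (intro borel_measurable_continuous_on_indicator) auto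
  then have "(\<lambda>x. indicator D x *\<^sub>R F x) \<in> borel_measurable lborel" by simp
  then show ?thesis unfolding set_borel_measurable_def by (rule measurable_completion)
qed

lemma open_lebesgue: "open (D::complex set) \<Longrightarrow> D \<in> sets lebesgue"
proof -
  assume "open D"
  then have "D \<in> sets borel" by simp
  then show ?thesis by (intro sets_completionI_sets) simp
qed

lemma Lp_L1:
  fixes g :: "complex \<Rightarrow> real"
  assumes p: "p \<ge> 1" and D: "D \<in> lmeasurable" and L: "Lp_on p D g"
  shows "set_integrable lebesgue D g"
proof -
  have m: "set_borel_measurable lebesgue D g" and i: "set_integrable lebesgue D (\<lambda>z. \<bar>g z\<bar> powr p)"
    using L unfolding Lp_on_def by auto
  have ii: "integrable lebesgue (indicator D :: complex \<Rightarrow> real)"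
    using D by (intro integrable_real_indicator) (auto simp: fmeasurableD emeasure_eq_measure2)
  have i1: "set_integrable lebesgue D (\<lambda>z. 1::real)"
    unfolding set_integrable_def using ii by simp
  have i2: "set_integrable lebesgue D (\<lambda>z. 1 + \<bar>g z\<bar> powr p)"
    using i1 i by (rule set_integral_add)
  have b: "norm (g z) \<le> norm (1 + \<bar>g z\<bar> powr p)" for z
  proof (cases "\<bar>g z\<bar> \<le> 1")
    case True
    have "0 \<le> \<bar>g z\<bar> powr p" by simp
    then have "\<bar>g z\<bar> \<le> 1 + \<bar>g z\<bar> powr p" using True by linarith
    then show ?thesis by simp
  next
    case False
    then have "\<bar>g z\<bar> powr 1 \<le> \<bar>g z\<bar> powr p" using p by (intro powr_mono) auto
    then show ?thesis using False by simp
  qed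
  show ?thesis by (rule set_integrable_bound[OF i2 m]) (use b in auto)
qed

lemma sqrt_powr_bound:
  fixes a b p :: real
  assumes p: "p > 0"
  shows "sqrt (a\<^sup>2 + b\<^sup>2) powr p \<le> 2 powr p * (\<bar>a\<bar> powr p + \<bar>b\<bar> powr p)"
proof -
  define m where "m = max \<bar>a\<bar> \<bar>b\<bar>"
  have m0: "m \<ge> 0" by (simp add: m_def)
  have "sqrt (a\<^sup>2 + b\<^sup>2) \<le> \<bar>a\<bar> + \<bar>b\<bar>" by (rule sqrt_sum_squares_le_sum_abs)
  also have "\<dots> \<le> 2 * m" by (simp add: m_def)
  finally have s: "sqrt (a\<^sup>2 + b\<^sup>2) \<le> 2 * m" .
  have "sqrt (a\<^sup>2 + b\<^sup>2) powr p \<le> (2 * m) powr p"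
    using s p by (intro powr_mono2) auto
  also have "\<dots> = 2 powr p * m powr p" using m0 by (simp add: powr_mult)
  also have "m powr p \<le> \<bar>a\<bar> powr p + \<bar>b\<bar> powr p"
    by (cases "\<bar>a\<bar> \<le> \<bar>b\<bar>") (auto simp: m_def max_def)
  then have "2 powr p * m powr p \<le> 2 powr p * (\<bar>a\<bar> powr p + \<bar>b\<bar> powr p)" by simp
  finally show ?thesis .
qed

lemma weak_eq_classical:
  fixes u g :: "complex \<Rightarrow> real"
  assumes D: "open D"
    and du: "\<And>z. z \<in> D \<Longrightarrow> u differentiable (at z)"
    and cu: "continuous_on D (\<lambda>z. frechet_derivative u (at z) v)"
    and cpsi: "\<And>\<psi>. test_fun D \<psi> \<Longrightarrow> continuous_on UNIV (\<lambda>z. frechet_derivative \<psi> (at z) v)"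
    and gL1: "set_integrable lebesgue D g"
    and weak: "\<And>\<psi>. test_fun D \<psi> \<Longrightarrow>
       (LINT z:D|lebesgue. u z * frechet_derivative \<psi> (at z) v) = - (LINT z:D|lebesgue. g z * \<psi> z)"
  shows "\<exists>N. negligible N \<and> (\<forall>z\<in>D - N. g z = frechet_derivative u (at z) v)"
proof -
  define Du where "Du = (\<lambda>z. frechet_derivative u (at z) v)"
  have Dl: "D \<in> sets lebesgue" using D by (rule open_lebesgue)
  have loc: "set_integrable lebesgue (cbox c d) (\<lambda>z. g z - Du z)" if cd: "cbox c d \<subseteq> D" for c d
  proof -
    have "set_integrable lebesgue (cbox c d) g"
      by (rule set_integrable_subset[OF gL1 _ cd]) simp
    moreover have "set_integrable lebesgue (cbox c d) Du"
      using continuous_on_subset[OF cu cd] unfolding Du_def by (rule absolutely_integrable_continuous)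
    ultimately show ?thesis by (rule set_integral_diff)
  qed
  have zero: "(LINT z:D|lebesgue. (g z - Du z) * \<psi> z) = 0" if t: "test_fun D \<psi>" for \<psi>
  proof -
    note tf = test_fun_facts[OF t]
    define K where "K = closure {z. \<psi> z \<noteq> 0}"
    have K: "compact K" "K \<subseteq> D" "\<And>z. z \<notin> K \<Longrightarrow> \<psi> z = 0" unfolding K_def
      by (fact tf(5), fact tf(6), erule tf(7))
    note I = ibp[OF D du cu tf(1) cpsi[OF t] K]
    obtain B where B: "\<And>z. \<bar>\<psi> z\<bar> \<le> B" and B0: "B \<ge> 0"
    proof -
      have "bounded (\<psi> ` K)" using K(1) tf(4) by (intro compact_imp_bounded compact_continuous_image) (auto intro: continuous_on_subset)
      then obtain B where B: "\<And>z. z \<in> K \<Longrightarrow> \<bar>\<psi> z\<bar> \<le> B" by (auto simp: bounded_iff)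
      have "\<bar>\<psi> z\<bar> \<le> max B 0" for z
      proof (cases "z \<in> K")
        case True then show ?thesis using B[OF True] by (simp add: le_max_iff_disj)
      next
        case False then show ?thesis using K(3)[OF False] by simp
      qed
      then show ?thesis by (intro that[of "max B 0"]) auto
    qed
    have mpsi: "\<psi> \<in> borel_measurable lebesgue"
    proof -
      have "\<psi> \<in> borel_measurable borel" using tf(4) by (rule borel_measurable_continuous_onI)
      then have "\<psi> \<in> borel_measurable lborel" by simp
      then show ?thesis by (rule measurable_completion)
    qed
    have igp: "set_integrable lebesgue D (\<lambda>z. g z * \<psi> z)"
    proof (rule set_integrable_bound[OF set_integrable_mult_right[OF gL1, of B]])
      have mg: "(\<lambda>x. indicator D x *\<^sub>R g x) \<in> borel_measurable lebesgue"
        using gL1 unfolding set_integrable_def by (rule borel_measurable_integrable)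
      have "(\<lambda>x. (indicator D x *\<^sub>R g x) * \<psi> x) \<in> borel_measurable lebesgue"
        using mg mpsi by (rule borel_measurable_times)
      then show "set_borel_measurable lebesgue D (\<lambda>z. g z * \<psi> z)"
        unfolding set_borel_measurable_def by (simp add: mult.assoc)
      have "norm (g x * \<psi> x) \<le> norm (B * g x)" for x
      proof -
        have "\<bar>g x\<bar> * \<bar>\<psi> x\<bar> \<le> \<bar>g x\<bar> * B" using B[of x] by (intro mult_left_mono) auto
        then show ?thesis using B0 by (simp add: abs_mult mult.commute)
      qed
      then show "AE x in lebesgue. x \<in> D \<longrightarrow> norm (g x * \<psi> x) \<le> norm (B * g x)" by simp
    qed
    have "(LINT z:D|lebesgue. (g z - Du z) * \<psi> z) = (LINT z:D|lebesgue. g z * \<psi> z - Du z * \<psi> z)"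
      by (simp add: algebra_simps)
    also have "\<dots> = (LINT z:D|lebesgue. g z * \<psi> z) - (LINT z:D|lebesgue. Du z * \<psi> z)"
      using igp I(2) unfolding Du_def by (rule set_integral_diff(2))
    also have "\<dots> = 0" using I(3) weak[OF t] unfolding Du_def by linarith
    finally show ?thesis .
  qed
  obtain N where N: "negligible N" "\<forall>x\<in>D - N. g x - Du x = 0"
    using weak_zero_ae[OF D loc zero] by blast
  have "\<forall>x\<in>D - N. g x = Du x" using N(2) by simp
  then show ?thesis using N(1) unfolding Du_def by blast
qed

lemma lin_expand:
  fixes L :: "complex \<Rightarrow> complex"
  assumes "linear L"
  shows "L x = Re x *\<^sub>R L 1 + Im x *\<^sub>R L \<i>"
proof -
  have "x = Re x *\<^sub>R 1 + Im x *\<^sub>R \<i>" by (simp add: complex_eq_iff)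
  then have "L x = L (Re x *\<^sub>R 1 + Im x *\<^sub>R \<i>)" by simp
  also have "\<dots> = Re x *\<^sub>R L 1 + Im x *\<^sub>R L \<i>"
    using assms by (simp add: linear_add linear_scale)
  finally show ?thesis .
qed

lemma pointwise_inv:
  fixes \<phi> :: "complex \<Rightarrow> complex"
  assumes D: "open D" and inj: "inj_on \<phi> D" and z: "z \<in> D"
    and d\<phi>: "\<phi> differentiable (at z)" and d\<psi>: "(inv_into D \<phi>) differentiable (at (\<phi> z))"
  shows "\<bar>jac (frechet_derivative \<phi> (at z))\<bar> *
      (sqrt ((Re (pdx (inv_into D \<phi>) (\<phi> z)))\<^sup>2 + (Re (pdy (inv_into D \<phi>) (\<phi> z)))\<^sup>2) +
       sqrt ((Im (pdx (inv_into D \<phi>) (\<phi> z)))\<^sup>2 + (Im (pdy (inv_into D \<phi>) (\<phi> z)))\<^sup>2))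
     = cmod (pdx \<phi> z) + cmod (pdy \<phi> z)"
proof -
  define \<psi> where "\<psi> = inv_into D \<phi>"
  define A where "A = frechet_derivative \<phi> (at z)"
  define B where "B = frechet_derivative \<psi> (at (\<phi> z))"
  have hA: "(\<phi> has_derivative A) (at z)" using d\<phi> frechet_derivative_works A_def by blast
  have hB: "(\<psi> has_derivative B) (at (\<phi> z))" using d\<psi> frechet_derivative_works B_def \<psi>_def by blast
  have c1: "(\<psi> \<circ> \<phi> has_derivative B \<circ> A) (at z)" by (rule diff_chain_at[OF hA hB])
  have c2: "(\<psi> \<circ> \<phi> has_derivative (\<lambda>x. x)) (at z)"
  proof -
    have "((\<lambda>x. x) has_derivative (\<lambda>x. x)) (at z)" by simp
    then show ?thesis
      using has_derivative_transform_within_open[of "\<lambda>x. x" "\<lambda>x. x" z UNIV D "\<psi> \<circ> \<phi>"] D z inj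
      by (simp add: \<psi>_def)
  qed
  have BA: "B \<circ> A = (\<lambda>x. x)" using has_derivative_unique[OF c1 c2] .
  have lA: "linear A" using hA has_derivative_linear by blast
  have lB: "linear B" using hB has_derivative_linear by blast
  have e1: "Re (A 1) *\<^sub>R B 1 + Im (A 1) *\<^sub>R B \<i> = 1"
    using lin_expand[OF lB, of "A 1"] fun_cong[OF BA, of 1] by simp
  have e2: "Re (A \<i>) *\<^sub>R B 1 + Im (A \<i>) *\<^sub>R B \<i> = \<i>"
    using lin_expand[OF lB, of "A \<i>"] fun_cong[OF BA, of \<i>] by simp
  note r = alg_inv[OF e1 e2]
  show ?thesis using r unfolding jac_def pdx_def pdy_def A_def[symmetric] B_def[symmetric] \<psi>_def[symmetric] .
qed

lemma abs_le_sqrt: "\<bar>x\<bar> \<le> sqrt (x\<^sup>2 + y\<^sup>2)"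
proof -
  have "\<bar>x\<bar> = sqrt (x\<^sup>2)" by simp
  also have "\<dots> \<le> sqrt (x\<^sup>2 + y\<^sup>2)" by (intro real_sqrt_le_mono) simp
  finally show ?thesis .
qed

lemma bound_pt:
  fixes a c :: complex and p :: real
  assumes p: "p > 1"
  shows "cmod a + cmod c \<le> 4 * (sqrt ((Re a)\<^sup>2 + (Re c)\<^sup>2) powr p + sqrt ((Im a)\<^sup>2 + (Im c)\<^sup>2) powr p) powr (1 / p)"
proof -
  define gu where "gu = sqrt ((Re a)\<^sup>2 + (Re c)\<^sup>2)"
  define gv where "gv = sqrt ((Im a)\<^sup>2 + (Im c)\<^sup>2)"
  define G where "G = gu powr p + gv powr p"
  have gu0: "gu \<ge> 0" and gv0: "gv \<ge> 0" by (simp_all add: gu_def gv_def)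
  have "cmod a \<le> \<bar>Re a\<bar> + \<bar>Im a\<bar>" by (rule cmod_le)
  also have "\<bar>Re a\<bar> \<le> gu" unfolding gu_def by (rule abs_le_sqrt)
  also have "\<bar>Im a\<bar> \<le> gv" unfolding gv_def by (rule abs_le_sqrt)
  finally have a: "cmod a \<le> gu + gv" by simp
  have "cmod c \<le> \<bar>Re c\<bar> + \<bar>Im c\<bar>" by (rule cmod_le)
  also have "\<bar>Re c\<bar> \<le> gu" unfolding gu_def using abs_le_sqrt[of "Re c" "Re a"] by (simp add: add.commute)
  also have "\<bar>Im c\<bar> \<le> gv" unfolding gv_def using abs_le_sqrt[of "Im c" "Im a"] by (simp add: add.commute)
  finally have c: "cmod c \<le> gu + gv" by simp
  have gp: "g \<le> G powr (1 / p)" if "g \<ge> 0" "g powr p \<le> G" for g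
  proof -
    have "g = (g powr p) powr (1 / p)" using that p by (simp add: powr_powr)
    also have "\<dots> \<le> G powr (1 / p)" using that p by (intro powr_mono2) auto
    finally show ?thesis .
  qed
  have "gu \<le> G powr (1 / p)" using gu0 by (intro gp) (auto simp: G_def)
  moreover have "gv \<le> G powr (1 / p)" using gv0 by (intro gp) (auto simp: G_def)
  ultimately show ?thesis using a c unfolding G_def gu_def gv_def by linarith
qed

lemma const_int: "(S::complex set) \<in> lmeasurable \<Longrightarrow> set_integrable lebesgue S (\<lambda>_. c::real)"
proof -
  assume S: "S \<in> lmeasurable"
  have ii: "integrable lebesgue (indicator S :: complex \<Rightarrow> real)"
    using S by (intro integrable_real_indicator) (auto simp: fmeasurableD emeasure_eq_measure2)
  show ?thesis unfolding set_integrable_def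
    using integrable_mult_right[OF ii, of c] by (simp add: mult.commute)
qed

lemma cont_diff_on:
  assumes "\<And>w. w \<in> S \<Longrightarrow> f differentiable (at w)"
  shows "continuous_on S f"
proof -
  have "\<And>w. w \<in> S \<Longrightarrow> isCont f w" using assms differentiable_imp_continuous_within by blast
  then show ?thesis by (intro continuous_at_imp_continuous_on ballI)
qed

lemma R_comp:
  fixes R :: "complex \<Rightarrow> real"
  assumes R: "bounded_linear R" and d: "f differentiable (at z)"
  shows "frechet_derivative (\<lambda>z. R (f z)) (at z) v = R (frechet_derivative f (at z) v)"
    and "(\<lambda>z. R (f z)) differentiable (at z)"
proof -
  have hd: "((\<lambda>z. R (f z)) has_derivative (\<lambda>h. R (frechet_derivative f (at z) h))) (at z)"
    using bounded_linear.has_derivative[OF R] d frechet_derivative_works by blast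
  show "frechet_derivative (\<lambda>z. R (f z)) (at z) v = R (frechet_derivative f (at z) v)"
    unfolding frechet_derivative_at[OF hd, symmetric] by (rule refl)
  show "(\<lambda>z. R (f z)) differentiable (at z)" using hd unfolding differentiable_def by blast
qed

lemma weak_classical_R:
  fixes \<phi> :: "complex \<Rightarrow> complex" and R :: "complex \<Rightarrow> real" and g :: "complex \<Rightarrow> real"
  assumes D: "open D" and Dm: "D \<in> lmeasurable" and p: "p \<ge> 1"
    and R: "bounded_linear R"
    and d\<phi>: "\<And>z. z \<in> D \<Longrightarrow> \<phi> differentiable (at z)"
    and c: "continuous_on D (\<lambda>z. frechet_derivative \<phi> (at z) v)"
    and cpsi: "\<And>\<psi>. test_fun D \<psi> \<Longrightarrow> continuous_on UNIV (\<lambda>z. frechet_derivative \<psi> (at z) v)"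
    and L: "Lp_on p D g"
    and weak: "\<And>\<psi>. test_fun D \<psi> \<Longrightarrow> (LINT z:D|lebesgue. R (\<phi> z) * frechet_derivative \<psi> (at z) v) = - (LINT z:D|lebesgue. g z * \<psi> z)"
  shows "\<exists>N. negligible N \<and> (\<forall>z\<in>D - N. g z = R (frechet_derivative \<phi> (at z) v))"
proof -
  have fd: "frechet_derivative (\<lambda>z. R (\<phi> z)) (at z) v = R (frechet_derivative \<phi> (at z) v)" if "z \<in> D" for z
    using R_comp(1)[OF R d\<phi>[OF that]] .
  have du: "(\<lambda>z. R (\<phi> z)) differentiable (at z)" if "z \<in> D" for z
    using R_comp(2)[OF R d\<phi>[OF that]] .
  have cu: "continuous_on D (\<lambda>z. frechet_derivative (\<lambda>z. R (\<phi> z)) (at z) v)"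
  proof -
    have "continuous_on D (\<lambda>z. R (frechet_derivative \<phi> (at z) v))"
      using bounded_linear.continuous_on[OF R c] .
    then show ?thesis by (rule continuous_on_eq) (simp add: fd)
  qed
  obtain N where N: "negligible N" "\<forall>z\<in>D - N. g z = frechet_derivative (\<lambda>z. R (\<phi> z)) (at z) v"
    using weak_eq_classical[OF D du cu cpsi Lp_L1[OF p Dm L] weak] by blast
  have "\<forall>z\<in>D - N. g z = R (frechet_derivative \<phi> (at z) v)"
  proof
    fix z assume z: "z \<in> D - N"
    then show "g z = R (frechet_derivative \<phi> (at z) v)" using N(2) fd[of z] by simp
  qed
  then show ?thesis using N(1) by blast
qed

lemma weak_dir:
  fixes \<psi> :: "complex \<Rightarrow> complex" and R :: "complex \<Rightarrow> real"
  assumes S: "open S" and R: "bounded_linear R"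
    and d\<psi>: "\<And>w. w \<in> S \<Longrightarrow> \<psi> differentiable (at w)"
    and cv: "continuous_on S (\<lambda>w. frechet_derivative \<psi> (at w) v)"
    and t: "test_fun S \<psi>0" and cpv: "continuous_on UNIV (\<lambda>z. frechet_derivative \<psi>0 (at z) v)"
  shows "(LINT w:S|lebesgue. R (\<psi> w) * frechet_derivative \<psi>0 (at w) v) =
     - (LINT w:S|lebesgue. R (frechet_derivative \<psi> (at w) v) * \<psi>0 w)"
proof -
  have fd: "frechet_derivative (\<lambda>z. R (\<psi> z)) (at z) v = R (frechet_derivative \<psi> (at z) v)" if "z \<in> S" for z
    using R_comp(1)[OF R d\<psi>[OF that]] .
  have du: "(\<lambda>z. R (\<psi> z)) differentiable (at z)" if "z \<in> S" for z
    using R_comp(2)[OF R d\<psi>[OF that]] .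
  have cu: "continuous_on S (\<lambda>z. frechet_derivative (\<lambda>z. R (\<psi> z)) (at z) v)"
  proof -
    have "continuous_on S (\<lambda>z. R (frechet_derivative \<psi> (at z) v))"
      using bounded_linear.continuous_on[OF R cv] .
    then show ?thesis by (rule continuous_on_eq) (simp add: fd)
  qed
  note tf = test_fun_facts[OF t]
  define K where "K = closure {z. \<psi>0 z \<noteq> 0}"
  have K: "compact K" "K \<subseteq> S" "\<And>z. z \<notin> K \<Longrightarrow> \<psi>0 z = 0" unfolding K_def
    by (fact tf(5), fact tf(6), erule tf(7))
  note I = ibp[OF S du cu tf(1) cpv K]
  have "(LINT w:S|lebesgue. frechet_derivative (\<lambda>z. R (\<psi> z)) (at w) v * \<psi>0 w) =
      (LINT w:S|lebesgue. R (frechet_derivative \<psi> (at w) v) * \<psi>0 w)"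
    by (rule set_lebesgue_integral_cong) (simp_all add: open_lebesgue[OF S] fd)
  then show ?thesis using I(3) by simp
qed

lemma Lp1_bound:
  fixes f H :: "complex \<Rightarrow> real"
  assumes S: "open S" and c: "continuous_on S f" and iH: "set_integrable lebesgue S H"
    and b: "\<And>w. w \<in> S \<Longrightarrow> \<bar>f w\<bar> \<le> H w"
  shows "Lp_on 1 S f"
proof -
  have m: "set_borel_measurable lebesgue S f" using cont_setmeas[OF S c] .
  have m2: "set_borel_measurable lebesgue S (\<lambda>w. \<bar>f w\<bar> powr 1)"
    using cont_setmeas[OF S] c by (simp add: continuous_on_rabs)
  have "set_integrable lebesgue S (\<lambda>w. \<bar>f w\<bar> powr 1)"
  proof (rule set_integrable_bound[OF iH m2])
    have "\<And>x. x \<in> S \<longrightarrow> norm (\<bar>f x\<bar> powr 1) \<le> norm (H x)"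
    proof
      fix x assume "x \<in> S"
      then show "norm (\<bar>f x\<bar> powr 1) \<le> norm (H x)" using b[of x] by simp
    qed
    then show "AE x in lebesgue. x \<in> S \<longrightarrow> norm (\<bar>f x\<bar> powr 1) \<le> norm (H x)" by simp
  qed
  then show ?thesis unfolding Lp_on_def using m by simp
qed

lemma W1p_real_R:
  fixes \<psi> :: "complex \<Rightarrow> complex" and R :: "complex \<Rightarrow> real" and H :: "complex \<Rightarrow> real"
  assumes S: "open S" and Sm: "S \<in> lmeasurable" and R: "bounded_linear R"
    and d\<psi>: "\<And>w. w \<in> S \<Longrightarrow> \<psi> differentiable (at w)"
    and cx: "continuous_on S (pdx \<psi>)" and cy: "continuous_on S (pdy \<psi>)"
    and M: "\<And>w. w \<in> S \<Longrightarrow> \<bar>R (\<psi> w)\<bar> \<le> M"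
    and iH: "set_integrable lebesgue S H"
    and Hx: "\<And>w. w \<in> S \<Longrightarrow> \<bar>R (pdx \<psi> w)\<bar> \<le> H w"
    and Hy: "\<And>w. w \<in> S \<Longrightarrow> \<bar>R (pdy \<psi> w)\<bar> \<le> H w"
  shows "W1p_real 1 S (\<lambda>w. R (\<psi> w))"
proof -
  have c\<psi>: "continuous_on S \<psi>" using d\<psi> by (rule cont_diff_on)
  have L0: "Lp_on 1 S (\<lambda>w. R (\<psi> w))"
    using S bounded_linear.continuous_on[OF R c\<psi>] const_int[OF Sm, of M] M by (rule Lp1_bound)
  have Lx: "Lp_on 1 S (\<lambda>w. R (pdx \<psi> w))"
    using S bounded_linear.continuous_on[OF R cx] iH Hx by (rule Lp1_bound)
  have Ly: "Lp_on 1 S (\<lambda>w. R (pdy \<psi> w))"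
    using S bounded_linear.continuous_on[OF R cy] iH Hy by (rule Lp1_bound)
  have wx: "weak_pdx S (\<lambda>w. R (\<psi> w)) (\<lambda>w. R (pdx \<psi> w))"
    unfolding weak_pdx_def
  proof (intro allI impI)
    fix \<psi>0 assume t: "test_fun S \<psi>0"
    show "(LINT z:S|lebesgue. R (\<psi> z) * pdx \<psi>0 z) = - (LINT z:S|lebesgue. R (pdx \<psi> z) * \<psi>0 z)"
      using weak_dir[OF S R d\<psi> _ t test_fun_facts(2)[OF t]] cx unfolding pdx_def by simp
  qed
  have wy: "weak_pdy S (\<lambda>w. R (\<psi> w)) (\<lambda>w. R (pdy \<psi> w))"
    unfolding weak_pdy_def
  proof (intro allI impI)
    fix \<psi>0 assume t: "test_fun S \<psi>0"
    show "(LINT z:S|lebesgue. R (\<psi> z) * pdy \<psi>0 z) = - (LINT z:S|lebesgue. R (pdy \<psi> z) * \<psi>0 z)"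
      using weak_dir[OF S R d\<psi> _ t test_fun_facts(3)[OF t]] cy unfolding pdy_def by simp
  qed
  show ?thesis unfolding W1p_real_def using L0 Lx Ly wx wy by blast
qed

theorem mainTheorem10:
  fixes D Dstar :: "complex set" and p :: real and \<phi> :: "complex \<Rightarrow> complex"
  assumes "open D" "connected D" "bounded D"
    and "open Dstar" "connected Dstar" "bounded Dstar"
    and "1 < p"
    and "C1_diffeomorphism \<phi> D Dstar"
    and "W1p p D \<phi>"
  shows "W1p 1 Dstar (inv_into D \<phi>) \<and>
    energy 1 Dstar (inv_into D \<phi>)
      \<le> 4 * (measure lebesgue D) powr (1 - 1 / p) * (energy p D \<phi>) powr (1 / p)"
proof -
  define \<psi> where "\<psi> = inv_into D \<phi>"
  have D: "open D" and Ds: "open Dstar" and p: "p > 1" using assms by auto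
  have p1: "p \<ge> 1" and p0: "p > 0" using p by auto
  have bij: "bij_betw \<phi> D Dstar" and C1\<phi>: "C1_map_on \<phi> D" and C1\<psi>: "C1_map_on \<psi> Dstar"
    using assms(8) unfolding C1_diffeomorphism_def \<psi>_def by auto
  have inj: "inj_on \<phi> D" and img: "\<phi> ` D = Dstar" using bij by (auto simp: bij_betw_def)
  have d\<phi>: "\<And>z. z \<in> D \<Longrightarrow> \<phi> differentiable (at z)" and c\<phi>x: "continuous_on D (pdx \<phi>)"
    and c\<phi>y: "continuous_on D (pdy \<phi>)" using C1\<phi> unfolding C1_map_on_def by auto
  have d\<psi>: "\<And>w. w \<in> Dstar \<Longrightarrow> \<psi> differentiable (at w)" and c\<psi>x: "continuous_on Dstar (pdx \<psi>)"
    and c\<psi>y: "continuous_on Dstar (pdy \<psi>)" using C1\<psi> unfolding C1_map_on_def by auto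
  have Dm: "D \<in> lmeasurable" using assms(3) open_lebesgue[OF D] by (rule bounded_set_imp_lmeasurable)
  have Dsm: "Dstar \<in> lmeasurable" using assms(6) open_lebesgue[OF Ds] by (rule bounded_set_imp_lmeasurable)
  have Dl: "D \<in> sets lebesgue" and Dsl: "Dstar \<in> sets lebesgue" using open_lebesgue D Ds by auto

  obtain gux guy where Lux: "Lp_on p D gux" and Luy: "Lp_on p D guy"
    and wux: "weak_pdx D (\<lambda>z. Re (\<phi> z)) gux" and wuy: "weak_pdy D (\<lambda>z. Re (\<phi> z)) guy"
    using assms(9) unfolding W1p_def W1p_real_def by blast
  obtain gvx gvy where Lvx: "Lp_on p D gvx" and Lvy: "Lp_on p D gvy"
    and wvx: "weak_pdx D (\<lambda>z. Im (\<phi> z)) gvx" and wvy: "weak_pdy D (\<lambda>z. Im (\<phi> z)) gvy"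
    using assms(9) unfolding W1p_def W1p_real_def by blast
  have cfx: "continuous_on D (\<lambda>z. frechet_derivative \<phi> (at z) 1)" using c\<phi>x unfolding pdx_def .
  have cfy: "continuous_on D (\<lambda>z. frechet_derivative \<phi> (at z) \<i>)" using c\<phi>y unfolding pdy_def .
  have tx: "\<And>\<psi>. test_fun D \<psi> \<Longrightarrow> continuous_on UNIV (\<lambda>z. frechet_derivative \<psi> (at z) 1)"
    using test_fun_facts(2) by blast
  have ty: "\<And>\<psi>. test_fun D \<psi> \<Longrightarrow> continuous_on UNIV (\<lambda>z. frechet_derivative \<psi> (at z) \<i>)"
    using test_fun_facts(3) by blast
  obtain N1 where N1: "negligible N1" "\<forall>z\<in>D - N1. gux z = Re (pdx \<phi> z)"
    using weak_classical_R[OF D Dm p1 bounded_linear_Re d\<phi> cfx tx Lux] wux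
    unfolding weak_pdx_def pdx_def by blast
  obtain N2 where N2: "negligible N2" "\<forall>z\<in>D - N2. guy z = Re (pdy \<phi> z)"
    using weak_classical_R[OF D Dm p1 bounded_linear_Re d\<phi> cfy ty Luy] wuy
    unfolding weak_pdy_def pdy_def by blast
  obtain N3 where N3: "negligible N3" "\<forall>z\<in>D - N3. gvx z = Im (pdx \<phi> z)"
    using weak_classical_R[OF D Dm p1 bounded_linear_Im d\<phi> cfx tx Lvx] wvx
    unfolding weak_pdx_def pdx_def by blast
  obtain N4 where N4: "negligible N4" "\<forall>z\<in>D - N4. gvy z = Im (pdy \<phi> z)"
    using weak_classical_R[OF D Dm p1 bounded_linear_Im d\<phi> cfy ty Lvy] wvy
    unfolding weak_pdy_def pdy_def by blast
  define N where "N = N1 \<union> N2 \<union> N3 \<union> N4"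
  have "negligible N" unfolding N_def using N1(1) N2(1) N3(1) N4(1) by (intro negligible_Un)
  then have Nn: "N \<in> null_sets lebesgue" by (simp add: negligible_iff_null_sets)

  define G where "G = (\<lambda>z. sqrt ((Re (pdx \<phi> z))\<^sup>2 + (Re (pdy \<phi> z))\<^sup>2) powr p +
     sqrt ((Im (pdx \<phi> z))\<^sup>2 + (Im (pdy \<phi> z))\<^sup>2) powr p)"
  have G0: "G z \<ge> 0" for z by (simp add: G_def)
  have cG: "continuous_on D G" unfolding G_def
    by (intro continuous_intros continuous_on_powr' c\<phi>x c\<phi>y) (use p0 in auto)
  have iLp: "set_integrable lebesgue D (\<lambda>z. \<bar>g z\<bar> powr p)" if "Lp_on p D g" for g
    using that unfolding Lp_on_def by blast
  define Bd where "Bd = (\<lambda>z. 2 powr p * (\<bar>gux z\<bar> powr p + \<bar>guy z\<bar> powr p) + 2 powr p * (\<bar>gvx z\<bar> powr p + \<bar>gvy z\<bar> powr p))"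
  have iBd: "set_integrable lebesgue D Bd" unfolding Bd_def
    by (intro set_integral_add set_integrable_mult_right iLp Lux Luy Lvx Lvy)
  have iG: "set_integrable lebesgue D G"
  proof (rule set_integrable_bound[OF iBd cont_setmeas[OF D cG]])
    have "x \<in> D \<longrightarrow> norm (G x) \<le> norm (Bd x)" if "x \<notin> N" for x
    proof
      assume x: "x \<in> D"
      have e: "gux x = Re (pdx \<phi> x)" "guy x = Re (pdy \<phi> x)" "gvx x = Im (pdx \<phi> x)" "gvy x = Im (pdy \<phi> x)"
        using N1(2) N2(2) N3(2) N4(2) x that unfolding N_def by auto
      have "G x \<le> Bd x" unfolding G_def Bd_def e
        by (intro add_mono sqrt_powr_bound p0)
      moreover have "Bd x \<ge> 0" unfolding Bd_def by simp
      ultimately show "norm (G x) \<le> norm (Bd x)" using G0[of x] by simp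
    qed
    then show "AE x in lebesgue. x \<in> D \<longrightarrow> norm (G x) \<le> norm (Bd x)"
      using AE_not_in[OF Nn] by (rule eventually_mono[rotated]) 
  qed
  have cGp: "continuous_on D (\<lambda>z. G z powr (1 / p))"
    using cG G0 p0 by (intro continuous_on_powr' continuous_intros) auto
  have iGp: "set_integrable lebesgue D (\<lambda>z. G z powr (1 / p))"
  proof (rule set_integrable_bound[OF set_integral_add(1)[OF const_int[OF Dm, of 1] iG] cont_setmeas[OF D cGp]])
    have "norm (G x powr (1 / p)) \<le> norm (1 + G x)" for x
    proof -
      have "G x powr (1 / p) \<le> (1 / p) * (G x * 1 powr (1 - p)) + (1 - 1 / p) * 1"
        using young_pt[OF p G0[of x], of 1] by simp
      also have "\<dots> \<le> G x + 1"
      proof -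
        have a: "(1 / p) * G x \<le> G x" using p G0[of x] by (simp add: mult_le_cancel_right1 field_simps)
        have b: "1 / p \<ge> 0" using p by simp
        have c: "(1 / p) * (G x * 1 powr (1 - p)) + (1 - 1 / p) * 1 = (1 / p) * G x + (1 - 1 / p)" by simp
        show ?thesis unfolding c using a b by linarith
      qed
      finally show ?thesis using G0[of x] by simp
    qed
    then show "AE x in lebesgue. x \<in> D \<longrightarrow> norm (G x powr (1 / p)) \<le> norm (1 + G x)" by simp
  qed

  define H where "H = (\<lambda>w. sqrt ((Re (pdx \<psi> w))\<^sup>2 + (Re (pdy \<psi> w))\<^sup>2) +
       sqrt ((Im (pdx \<psi> w))\<^sup>2 + (Im (pdy \<psi> w))\<^sup>2))"
  define F where "F = (\<lambda>z. cmod (pdx \<phi> z) + cmod (pdy \<phi> z))"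
  have pw: "\<bar>jac (frechet_derivative \<phi> (at z))\<bar> * H (\<phi> z) = F z" if z: "z \<in> D" for z
  proof -
    have "\<phi> z \<in> Dstar" using img z by blast
    then have "(inv_into D \<phi>) differentiable (at (\<phi> z))" using d\<psi> unfolding \<psi>_def by blast
    from pointwise_inv[OF D inj z d\<phi>[OF z] this] show ?thesis unfolding H_def F_def \<psi>_def .
  qed
  have cF: "continuous_on D F" unfolding F_def by (intro continuous_intros c\<phi>x c\<phi>y)
  have FG: "F z \<le> 4 * G z powr (1 / p)" for z
    unfolding F_def G_def using bound_pt[OF p] .
  have iF: "set_integrable lebesgue D F"
  proof (rule set_integrable_bound[OF set_integrable_mult_right[OF iGp, of 4] cont_setmeas[OF D cF]])
    have "norm (F x) \<le> norm (4 * G x powr (1 / p))" for x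
    proof -
      have "F x \<ge> 0" by (simp add: F_def)
      then show ?thesis using FG[of x] by simp
    qed
    then show "AE x in lebesgue. x \<in> D \<longrightarrow> norm (F x) \<le> norm (4 * G x powr (1 / p))" by simp
  qed
  have cH: "continuous_on Dstar H" unfolding H_def by (intro continuous_intros c\<psi>x c\<psi>y)
  have der: "\<And>x. x \<in> D \<Longrightarrow> (\<phi> has_derivative frechet_derivative \<phi> (at x)) (at x)"
    using d\<phi> frechet_derivative_works by blast
  have c1: "continuous_on D (\<lambda>x. \<bar>jac (frechet_derivative \<phi> (at x))\<bar> * H (\<phi> x))"
    using cF by (rule continuous_on_eq) (simp add: pw)
  have int1: "set_integrable lebesgue D (\<lambda>x. \<bar>jac (frechet_derivative \<phi> (at x))\<bar> * H (\<phi> x))"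
    using iF by (rule iffD1[OF set_integrable_cong, rotated 3]) (simp_all add: pw)
  have cov: "set_integrable lebesgue (\<phi> ` D) H \<and>
    (LINT z:\<phi> ` D|lebesgue. H z) = (LINT x:D|lebesgue. \<bar>jac (frechet_derivative \<phi> (at x))\<bar> * H (\<phi> x))"
    using cov_complex[OF D _ der inj c1 _ int1] Ds cH img by simp
  have iH: "set_integrable lebesgue Dstar H" using cov img by simp
  have eqH: "(LINT z:Dstar|lebesgue. H z) = (LINT x:D|lebesgue. F x)"
  proof -
    have "(LINT x:D|lebesgue. \<bar>jac (frechet_derivative \<phi> (at x))\<bar> * H (\<phi> x)) = (LINT x:D|lebesgue. F x)"
      by (rule set_lebesgue_integral_cong[OF Dl]) (simp add: pw)
    then show ?thesis using cov img by simp
  qed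

  have en1: "energy 1 Dstar \<psi> = (LINT z:Dstar|lebesgue. H z)"
    unfolding energy_def H_def by (rule set_lebesgue_integral_cong[OF Dsl]) simp
  have enp: "energy p D \<phi> = (LINT z:D|lebesgue. G z)"
    unfolding energy_def G_def by (rule refl)
  have "(LINT x:D|lebesgue. F x) \<le> (LINT x:D|lebesgue. 4 * G x powr (1 / p))"
    using iF set_integrable_mult_right[OF iGp, of 4] FG by (intro set_integral_mono) auto
  also have "\<dots> = 4 * (LINT x:D|lebesgue. G x powr (1 / p))" by simp
  also have "\<dots> \<le> 4 * ((measure lebesgue D) powr (1 - 1 / p) * (LINT z:D|lebesgue. G z) powr (1 / p))"
    using holder_like[OF p Dm iG G0 iGp] by simp
  finally have est: "energy 1 Dstar \<psi> \<le> 4 * (measure lebesgue D) powr (1 - 1 / p) * (energy p D \<phi>) powr (1 / p)"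
    using en1 enp eqH by (simp add: mult.assoc)

  obtain M where M0: "\<forall>z\<in>D. norm z \<le> M" using assms(3) unfolding bounded_iff by (elim exE) (rule that)
  have M: "cmod z \<le> M" if "z \<in> D" for z using M0 that by simp
  have \<psi>D: "\<psi> w \<in> D" if "w \<in> Dstar" for w
  proof -
    have "w \<in> \<phi> ` D" using that img by simp
    then show ?thesis unfolding \<psi>_def by (rule inv_into_into)
  qed
  have HRe: "\<bar>Re (pdx \<psi> w)\<bar> \<le> H w" "\<bar>Re (pdy \<psi> w)\<bar> \<le> H w"
     "\<bar>Im (pdx \<psi> w)\<bar> \<le> H w" "\<bar>Im (pdy \<psi> w)\<bar> \<le> H w" for w
  proof -
    have s1: "0 \<le> sqrt ((Re (pdx \<psi> w))\<^sup>2 + (Re (pdy \<psi> w))\<^sup>2)" "0 \<le> sqrt ((Im (pdx \<psi> w))\<^sup>2 + (Im (pdy \<psi> w))\<^sup>2)"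
      by simp_all
    have "\<bar>Re (pdx \<psi> w)\<bar> \<le> sqrt ((Re (pdx \<psi> w))\<^sup>2 + (Re (pdy \<psi> w))\<^sup>2)" by (rule abs_le_sqrt)
    then show "\<bar>Re (pdx \<psi> w)\<bar> \<le> H w" using s1 unfolding H_def by linarith
    have "\<bar>Re (pdy \<psi> w)\<bar> \<le> sqrt ((Re (pdx \<psi> w))\<^sup>2 + (Re (pdy \<psi> w))\<^sup>2)"
      using abs_le_sqrt[of "Re (pdy \<psi> w)" "Re (pdx \<psi> w)"] by (simp add: add.commute)
    then show "\<bar>Re (pdy \<psi> w)\<bar> \<le> H w" using s1 unfolding H_def by linarith
    have "\<bar>Im (pdx \<psi> w)\<bar> \<le> sqrt ((Im (pdx \<psi> w))\<^sup>2 + (Im (pdy \<psi> w))\<^sup>2)" by (rule abs_le_sqrt)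
    then show "\<bar>Im (pdx \<psi> w)\<bar> \<le> H w" using s1 unfolding H_def by linarith
    have "\<bar>Im (pdy \<psi> w)\<bar> \<le> sqrt ((Im (pdx \<psi> w))\<^sup>2 + (Im (pdy \<psi> w))\<^sup>2)"
      using abs_le_sqrt[of "Im (pdy \<psi> w)" "Im (pdx \<psi> w)"] by (simp add: add.commute)
    then show "\<bar>Im (pdy \<psi> w)\<bar> \<le> H w" using s1 unfolding H_def by linarith
  qed
  have MRe: "\<bar>Re (\<psi> w)\<bar> \<le> M" if "w \<in> Dstar" for w
    using abs_Re_le_cmod[of "\<psi> w"] M[OF \<psi>D[OF that]] by linarith
  have MIm: "\<bar>Im (\<psi> w)\<bar> \<le> M" if "w \<in> Dstar" for w
    using abs_Im_le_cmod[of "\<psi> w"] M[OF \<psi>D[OF that]] by linarith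
  have W1: "W1p 1 Dstar \<psi>"
    unfolding W1p_def
    using W1p_real_R[OF Ds Dsm bounded_linear_Re d\<psi> c\<psi>x c\<psi>y MRe iH HRe(1) HRe(2)]
      W1p_real_R[OF Ds Dsm bounded_linear_Im d\<psi> c\<psi>x c\<psi>y MIm iH HRe(3) HRe(4)] by blast
  show ?thesis using W1 est unfolding \<psi>_def by blast
qed

end
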